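(* Let $r\ge 2$, $\alpha=2^r-1$, $\beta=2^{r-1}(2^r-1)$, let $\mathcal{C}\subseteq\mathbb{Z}_2^\alpha\times\mathbb{Z}_4^\beta$ be a $\mathbb{Z}_2\mathbb{Z}_4$-additive 1-perfect code and $D=\mathcal{C}^\perp$. If $D$ is $\mathbb{Z}_2\mathbb{Z}_4$-cyclic, then $D_X$ is a binary simplex code of length $2^r-1$ (and it is cyclic). Moreover, a codeword $\mathbf{z}\in D$ has zero $\mathbb{Z}_2$ part, $\mathbf{z}=(0,\dots,0\mid z'_1,\dots,z'_\beta)$, if and only if $\mathbf{z}\in D_b$.
   Context: A $\mathbb{Z}_2\mathbb{Z}_4$-additive code is an additive subgroup of $\mathbb{Z}_2^\alpha\times\mathbb{Z}_4^\beta$; vectors are $(u\mid u')$ with $u\in\mathbb{Z}_2^\alpha$ (the $X$ coordinates) and $u'\in\mathbb{Z}_4^\beta$; $D_X$ is the binary code of projections of codewords of $D$ onto the $X$ coordinates, and $D_b$ is the subgroup of codewords of $D$ of order at most 2. The Gray map $\phi:\mathbb{Z}_4\to\mathbb{Z}_2^2$ is $0\mapsto(0,0),1\mapsto(0,1),2\mapsto(1,1),3\mapsto(1,0)$, $\Phi(u\mid u')=(u\mid\phi(u'_1),\dots,\phi(u'_\beta))$. A binary code $C\subseteq\mathbb{Z}_2^n$ is 1-perfect if the Hamming balls of radius 1 around its codewords partition $\mathbb{Z}_2^n$; a $\mathbb{Z}_2\mathbb{Z}_4$-additive code is 1-perfect if its Gray image is. The dual is $\mathcal{C}^\perp=\{\mathbf{v}:\mathbf{u}\cdot\mathbf{v}=0\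 \forall\mathbf{u}\in\mathcal{C}\}$ with $\mathbf{u}\cdot\mathbf{v}=2\sum_{i=1}^\alpha u_iv_i+\sum_{j=1}^\beta u'_jv'_j\in\mathbb{Z}_4$. With $\sigma(v_1,\dots,v_m)=(v_m,v_1,\dots,v_{m-1})$ and $\sigma(u\mid u')=(\sigma(u)\mid\sigma(u'))$, a code is $\mathbb{Z}_2\mathbb{Z}_4$-cyclic if closed under $\sigma$. A binary simplex code of length $2^r-1$ is a binary linear code of dimension $r$ whose generator matrix has as columns all nonzero vectors of $\mathbb{Z}_2^r$ (in some order), i.e. the dual of a binary Hamming code. *)

theory Defs
  imports Main
begin

definition binvecs :: "nat \<Rightarrow> (nat \<Rightarrow> nat) set" where
  "binvecs n = {u. (\<forall>i<n. u i < 2) \<and> (\<forall>i\<ge>n. u i = 0)}"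

definition quatvecs :: "nat \<Rightarrow> (nat \<Rightarrow> nat) set" where
  "quatvecs n = {u. (\<forall>i<n. u i < 4) \<and> (\<forall>i\<ge>n. u i = 0)}"

type_synonym z24vec = "(nat \<Rightarrow> nat) \<times> (nat \<Rightarrow> nat)"

definition Z24 :: "nat \<Rightarrow> nat \<Rightarrow> z24vec set" where
  "Z24 \<alpha> \<beta> = binvecs \<alpha> \<times> quatvecs \<beta>"

definition z24_zero :: z24vec where
  "z24_zero = (\<lambda>_. 0, \<lambda>_. 0)"

definition z24_add :: "z24vec \<Rightarrow> z24vec \<Rightarrow> z24vec" where
  "z24_add x y = (\<lambda>i. (fst x i + fst y i) mod 2, \<lambda>j. (snd x j + snd y j) mod 4)"

text \<open>Additive code = additive subgroup of Z_2^alpha x Z_4^beta (finite group, so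
  containing 0 and closed under addition suffices).\<close>
definition z24_additive :: "nat \<Rightarrow> nat \<Rightarrow> z24vec set \<Rightarrow> bool" where
  "z24_additive \<alpha> \<beta> C \<longleftrightarrow> C \<subseteq> Z24 \<alpha> \<beta> \<and> z24_zero \<in> C \<and>
     (\<forall>x\<in>C. \<forall>y\<in>C. z24_add x y \<in> C)"

definition gray :: "nat \<Rightarrow> nat \<times> nat" where
  "gray a = (if a = 0 then (0,0) else if a = 1 then (0,1) else if a = 2 then (1,1) else (1,0))"

definition Gray :: "nat \<Rightarrow> nat \<Rightarrow> z24vec \<Rightarrow> (nat \<Rightarrow> nat)" where
  "Gray \<alpha> \<beta> x = (\<lambda>i. if i < \<alpha> then fst x i
      else if i < \<alpha> + 2 * \<beta> then
        (if even (i - \<alpha>) then fst (gray (snd x ((i - \<alpha>) div 2)))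
         else snd (gray (snd x ((i - \<alpha>) div 2))))
      else 0)"

definition hdist :: "nat \<Rightarrow> (nat \<Rightarrow> nat) \<Rightarrow> (nat \<Rightarrow> nat) \<Rightarrow> nat" where
  "hdist n x y = card {i. i < n \<and> x i \<noteq> y i}"

definition perfect1 :: "nat \<Rightarrow> (nat \<Rightarrow> nat) set \<Rightarrow> bool" where
  "perfect1 n B \<longleftrightarrow> B \<subseteq> binvecs n \<and> (\<forall>x\<in>binvecs n. \<exists>!c. c \<in> B \<and> hdist n x c \<le> 1)"

definition z24_perfect1 :: "nat \<Rightarrow> nat \<Rightarrow> z24vec set \<Rightarrow> bool" where
  "z24_perfect1 \<alpha> \<beta> C \<longleftrightarrow> perfect1 (\<alpha> + 2 * \<beta>) (Gray \<alpha> \<beta> ` C)"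

definition z24_inner :: "nat \<Rightarrow> nat \<Rightarrow> z24vec \<Rightarrow> z24vec \<Rightarrow> nat" where
  "z24_inner \<alpha> \<beta> u v =
     (2 * (\<Sum>i<\<alpha>. fst u i * fst v i) + (\<Sum>j<\<beta>. snd u j * snd v j)) mod 4"

definition z24_dual :: "nat \<Rightarrow> nat \<Rightarrow> z24vec set \<Rightarrow> z24vec set" where
  "z24_dual \<alpha> \<beta> C = {v \<in> Z24 \<alpha> \<beta>. \<forall>u\<in>C. z24_inner \<alpha> \<beta> u v = 0}"

text \<open>Cyclic shift (v_1,...,v_m) -> (v_m,v_1,...,v_{m-1}), 0-indexed.\<close>
definition rot :: "nat \<Rightarrow> (nat \<Rightarrow> nat) \<Rightarrow> (nat \<Rightarrow> nat)" where
  "rot m v = (\<lambda>i. if i < m then (if i = 0 then v (m - 1) else v (i - 1)) else 0)"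

definition z24_cyclic :: "nat \<Rightarrow> nat \<Rightarrow> z24vec set \<Rightarrow> bool" where
  "z24_cyclic \<alpha> \<beta> D \<longleftrightarrow> (\<forall>z\<in>D. (rot \<alpha> (fst z), rot \<beta> (snd z)) \<in> D)"

definition bin_cyclic :: "nat \<Rightarrow> (nat \<Rightarrow> nat) set \<Rightarrow> bool" where
  "bin_cyclic n B \<longleftrightarrow> (\<forall>x\<in>B. rot n x \<in> B)"

text \<open>D_X: projection onto the X (binary) coordinates; D_b: codewords of order at most 2.\<close>
definition proj_X :: "z24vec set \<Rightarrow> (nat \<Rightarrow> nat) set" where
  "proj_X D = fst ` D"

definition order2_part :: "z24vec set \<Rightarrow> z24vec set" where
  "order2_part D = {z \<in> D. z24_add z z = z24_zero}"

text \<open>Binary simplex code of length 2^r - 1: the row space over Z_2 of an r x n binary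
  matrix g whose columns are exactly all nonzero vectors of Z_2^r (each once).\<close>
definition simplex_code :: "nat \<Rightarrow> nat \<Rightarrow> (nat \<Rightarrow> nat) set \<Rightarrow> bool" where
  "simplex_code r n B \<longleftrightarrow> n = 2 ^ r - 1 \<and>
     (\<exists>g :: nat \<Rightarrow> nat \<Rightarrow> nat.
        (\<forall>k<r. g k \<in> binvecs n) \<and>
        bij_betw (\<lambda>j. \<lambda>k. if k < r then g k j else 0) {..<n} (binvecs r - {\<lambda>_. 0}) \<and>
        B = {(\<lambda>j. if j < n then (\<Sum>k<r. a k * g k j) mod 2 else 0) | a. a \<in> binvecs r})"

end

theory Submission
  imports Defs "HOL-Library.Numeral_Type" "HOL-Library.Function_Algebras" "HOL-Library.Product_Plus" Complex_Main
begin

definition vecs :: "nat \<Rightarrow> nat \<Rightarrow> (nat \<Rightarrow> nat) set" where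
  "vecs k n = {u. (\<forall>i<n. u i < k) \<and> (\<forall>i\<ge>n. u i = 0)}"

lemma vecs_Suc: "vecs k (Suc n) = (\<lambda>(u,x). u(n:=x)) ` (vecs k n \<times> {..<k})"
proof (intro set_eqI iffI)
  fix f assume f: "f \<in> vecs k (Suc n)"
  have "f = (\<lambda>(u,x). u(n:=x)) (f(n:=0), f n)" by auto
  moreover have "(f(n:=0), f n) \<in> vecs k n \<times> {..<k}" using f by (auto simp: vecs_def)
  ultimately show "f \<in> (\<lambda>(u,x). u(n:=x)) ` (vecs k n \<times> {..<k})" by blast
next
  fix f assume "f \<in> (\<lambda>(u,x). u(n:=x)) ` (vecs k n \<times> {..<k})"
  then show "f \<in> vecs k (Suc n)" by (auto simp: vecs_def less_Suc_eq)
qed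

lemma vecs_card: "finite (vecs k n) \<and> card (vecs k n) = k ^ n"
proof (induction n)
  case 0
  have "vecs k 0 = {\<lambda>_. 0}" unfolding vecs_def by (rule set_eqI) auto
  then show ?case by simp
next
  case (Suc n)
  have inj: "inj_on (\<lambda>(u,x). u(n:=x)) (vecs k n \<times> {..<k})"
  proof (rule inj_onI, clarsimp)
    fix u x u' x' assume "u \<in> vecs k n" "u' \<in> vecs k n" "u(n := x) = u'(n := x')"
    moreover have "u n = 0" "u' n = 0" using \<open>u \<in> vecs k n\<close> \<open>u' \<in> vecs k n\<close> by (auto simp: vecs_def)
    ultimately show "u = u' \<and> x = x'"
      by (metis fun_upd_idem fun_upd_same fun_upd_upd)
  qed
  show ?case using Suc inj by (simp add: vecs_Suc card_image card_cartesian_product)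
qed

lemma binvecs_vecs: "binvecs n = vecs 2 n" and quatvecs_vecs: "quatvecs n = vecs 4 n"
  by (auto simp: binvecs_def quatvecs_def vecs_def)

lemma z2_cases: "(x::2) = 0 \<or> x = 1"
proof (induct x)
  case (of_int z) then have "z = 0 \<or> z = 1" by auto
  then show ?case by auto
qed

lemma z4_cases: "(x::4) = 0 \<or> x = 1 \<or> x = 2 \<or> x = 3"
proof (induct x)
  case (of_int z) then have "z = 0 \<or> z = 1 \<or> z = 2 \<or> z = 3" by auto
  then show ?case by auto
qed

lemma of_nat_mod_CHAR: "of_nat (n mod CHAR('a)) = (of_nat n :: 'a::semiring_1)"
proof -
  have "of_nat n = (of_nat (n mod CHAR('a) + CHAR('a) * (n div CHAR('a))) :: 'a)" by simp
  also have "\<dots> = of_nat (n mod CHAR('a))" by (simp only: of_nat_add of_nat_mult of_nat_CHAR) simp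
  finally show ?thesis by simp
qed

lemma of_nat_mod2: "(of_nat (n mod 2) :: 2) = of_nat n"
  using of_nat_mod_CHAR[where 'a=2] by simp
lemma of_nat_mod4: "(of_nat (n mod 4) :: 4) = of_nat n"
  using of_nat_mod_CHAR[where 'a=4] by simp
lemma of_nat_2_eq0: "((of_nat n :: 2) = 0) \<longleftrightarrow> even n"
  using of_nat_eq_0_iff_char_dvd[where 'a=2] by simp
lemma of_nat_4_eq0: "((of_nat n :: 4) = 0) \<longleftrightarrow> 4 dvd n"
  using of_nat_eq_0_iff_char_dvd[where 'a=4] by simp

lemma z2_two[simp]: "(2::2) = 0" by simp
lemma z2_neg[simp]: "- (x::2) = x" using z2_cases[of x] by auto
lemma z4_four: "(x::4) + x + x + x = 0"
proof -
  have "(x::4) + x + x + x = 4 * x" by (simp add: algebra_simps)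
  also have "(4::4) = 0" by simp
  finally show ?thesis by simp
qed

lemma of_nat_inj2: "p < 2 \<Longrightarrow> q < 2 \<Longrightarrow> (of_nat p :: 2) = of_nat q \<longleftrightarrow> p = q"
  by (auto simp: less_2_cases_iff)
lemma of_nat_inj4: "p < 4 \<Longrightarrow> q < 4 \<Longrightarrow> (of_nat p :: 4) = of_nat q \<longleftrightarrow> p = q"
proof -
  assume a: "p < 4" "q < 4"
  have "(of_nat p :: 4) \<noteq> of_nat q" if "p < q" "q < 4" for p q
  proof
    assume "(of_nat p :: 4) = of_nat q"
    then have "CHAR(4) dvd (q - p)" using that of_nat_eq_iff_char_dvd by blast
    then have "4 dvd (q - p)" by simp
    then show False using that by (auto dest: dvd_imp_le)
  qed
  then show ?thesis using a by (metis linorder_neqE_nat)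
qed


type_synonym w = "(nat \<Rightarrow> 2) \<times> (nat \<Rightarrow> 4)"

definition conv2 :: "2 \<Rightarrow> nat" where "conv2 x = (if x = 0 then 0 else 1)"
definition conv4 :: "4 \<Rightarrow> nat" where
  "conv4 x = (if x = 0 then 0 else if x = 1 then 1 else if x = 2 then 2 else 3)"

lemma of_nat_conv2[simp]: "of_nat (conv2 x) = x"
  using z2_cases[of x] by (auto simp: conv2_def)
lemma of_nat_conv4[simp]: "of_nat (conv4 x) = x"
  using z4_cases[of x] by (auto simp: conv4_def)
lemma conv2_lt: "conv2 x < 2" by (simp add: conv2_def)
lemma conv4_lt: "conv4 x < 4" by (simp add: conv4_def)
lemma conv2_0[simp]: "conv2 0 = 0" by (simp add: conv2_def)
lemma conv4_0[simp]: "conv4 0 = 0" by (simp add: conv4_def)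
lemma conv2_of_nat: "p < 2 \<Longrightarrow> conv2 (of_nat p) = p"
  using of_nat_inj2[of p "conv2 (of_nat p)"] conv2_lt by auto
lemma conv2_of_nat_mod: "conv2 (of_nat p) = p mod 2"
  by (metis conv2_of_nat mod_less_divisor of_nat_mod2 zero_less_numeral)
lemma conv4_of_nat: "p < 4 \<Longrightarrow> conv4 (of_nat p) = p"
  using of_nat_inj4[of p "conv4 (of_nat p)"] conv4_lt by auto
lemma conv2_inj: "conv2 x = conv2 y \<longleftrightarrow> x = y"
  by (metis of_nat_conv2)

definition emb :: "z24vec \<Rightarrow> w" where
  "emb z = (\<lambda>i. of_nat (fst z i), \<lambda>j. of_nat (snd z j))"

definition GW :: "nat \<Rightarrow> nat \<Rightarrow> w set" where
  "GW a b = {w. (\<forall>i\<ge>a. fst w i = 0) \<and> (\<forall>j\<ge>b. snd w j = 0)}"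

definition unemb :: "w \<Rightarrow> z24vec" where
  "unemb w = (\<lambda>i. conv2 (fst w i), \<lambda>j. conv4 (snd w j))"

lemma emb_unemb[simp]: "emb (unemb w) = w"
  by (simp add: emb_def unemb_def)

lemma Z24_lt2: "z \<in> Z24 a b \<Longrightarrow> fst z i < 2"
  unfolding Z24_def binvecs_def by (cases "i < a") auto
lemma Z24_lt4: "z \<in> Z24 a b \<Longrightarrow> snd z i < 4"
  unfolding Z24_def quatvecs_def by (cases "i < b") auto

lemma unemb_emb: "z \<in> Z24 a b \<Longrightarrow> unemb (emb z) = z"
  unfolding emb_def unemb_def
  by (auto simp: prod_eq_iff fun_eq_iff conv2_of_nat conv4_of_nat Z24_lt2 Z24_lt4)

lemma unemb_in: "w \<in> GW a b \<Longrightarrow> unemb w \<in> Z24 a b"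
  unfolding Z24_def binvecs_def quatvecs_def GW_def unemb_def
  by (auto simp: conv2_lt conv4_lt)

lemma emb_in: "z \<in> Z24 a b \<Longrightarrow> emb z \<in> GW a b"
  unfolding Z24_def binvecs_def quatvecs_def GW_def emb_def by auto

lemma emb_inj: "inj_on emb (Z24 a b)"
  by (metis inj_onI unemb_emb)

lemma emb_image: "emb ` Z24 a b = GW a b"
proof
  show "emb ` Z24 a b \<subseteq> GW a b" using emb_in by blast
  show "GW a b \<subseteq> emb ` Z24 a b"
  proof
    fix w assume "w \<in> GW a b"
    then show "w \<in> emb ` Z24 a b" using unemb_in[of w] emb_unemb[of w] by (metis image_eqI)
  qed
qed

lemma Z24_card: "finite (Z24 a b) \<and> card (Z24 a b) = 2^a * 4^b"
  unfolding Z24_def binvecs_vecs quatvecs_vecs using vecs_card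
  by (simp add: card_cartesian_product)

lemma GW_card: "finite (GW a b) \<and> card (GW a b) = 2^a * 4^b"
  using Z24_card[of a b] emb_image[of a b] emb_inj[of a b]
  by (metis card_image finite_imageI)

lemma emb_add: "emb (z24_add x y) = emb x + emb y"
  by (simp add: emb_def z24_add_def fun_eq_iff of_nat_mod2 of_nat_mod4)

lemma emb_zero: "emb z24_zero = 0"
  by (simp add: emb_def z24_zero_def fun_eq_iff zero_prod_def)

lemma GW_zero[simp]: "0 \<in> GW a b" by (simp add: GW_def)
lemma GW_add[simp]: "x \<in> GW a b \<Longrightarrow> y \<in> GW a b \<Longrightarrow> x + y \<in> GW a b" by (simp add: GW_def)
lemma GW_neg[simp]: "x \<in> GW a b \<Longrightarrow> - x \<in> GW a b" by (simp add: GW_def)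
lemma GW_diff[simp]: "x \<in> GW a b \<Longrightarrow> y \<in> GW a b \<Longrightarrow> x - y \<in> GW a b" by (simp add: GW_def)

lemma four2: "4 * (y::2) = 0"
proof -
  have h: "(4::2) = 0" by simp
  show ?thesis by (simp only: h mult_zero_left)
qed
lemma four4: "4 * (y::4) = 0"
proof -
  have h: "(4::4) = 0" by simp
  show ?thesis by (simp only: h mult_zero_left)
qed
lemma w_four: "(x::w) + x + x + x = 0"
  by (cases x) (simp add: fun_eq_iff four2 four4 zero_prod_def)
   
lemma w_neg: "- (x::w) = x + x + x"
proof (rule minus_unique)
  show "x + (x + x + x) = 0" using w_four[of x] by (simp add: add.assoc)
qed

definition subgrp :: "w set \<Rightarrow> bool" where
  "subgrp H \<longleftrightarrow> 0 \<in> H \<and> (\<forall>x\<in>H. \<forall>y\<in>H. x + y \<in> H)"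

lemma subgrp_zero: "subgrp H \<Longrightarrow> 0 \<in> H" by (simp add: subgrp_def)
lemma subgrp_add: "subgrp H \<Longrightarrow> x \<in> H \<Longrightarrow> y \<in> H \<Longrightarrow> x + y \<in> H" by (simp add: subgrp_def)
lemma subgrp_neg: "subgrp H \<Longrightarrow> x \<in> H \<Longrightarrow> - x \<in> H"
  unfolding w_neg by (simp add: subgrp_def)
lemma subgrp_diff: "subgrp H \<Longrightarrow> x \<in> H \<Longrightarrow> y \<in> H \<Longrightarrow> x - y \<in> H"
  using subgrp_add[of H x "- y"] subgrp_neg[of H y] by simp

lemma subgrp_GW: "subgrp (GW a b)" by (simp add: subgrp_def)

definition tw :: "2 \<Rightarrow> 4" where "tw x = (if x = 0 then 0 else 2)"

lemma tw_add: "tw (x + y) = tw x + tw y"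
  using z2_cases[of x] z2_cases[of y] by (auto simp: tw_def)
lemma tw_0[simp]: "tw 0 = 0" by (simp add: tw_def)
lemma tw_eq0[simp]: "tw x = 0 \<longleftrightarrow> x = 0" by (simp add: tw_def)
lemma tw_of_nat: "tw (of_nat n) = 2 * (of_nat n :: 4)"
proof (cases "even n")
  case True
  then obtain k where k: "n = 2 * k" by blast
  have "2 * (of_nat n :: 4) = of_nat (4 * k)" using k by simp
  also have "\<dots> = 0" by (simp only: of_nat_4_eq0) simp
  finally show ?thesis using True by (simp add: tw_def of_nat_2_eq0)
next
  case False
  then obtain k where k: "n = 2 * k + 1" using oddE by blast
  have "2 * (of_nat n :: 4) = of_nat ((4 * k + 2) mod 4)" using k by (simp only: of_nat_mod4) simp
  also have "(4 * k + 2) mod 4 = 2" by presburger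
  finally show ?thesis using False by (simp add: tw_def of_nat_2_eq0)
qed

lemma tw_of_nat_mult[simp]: "tw (of_nat p * of_nat q) = 2 * (of_nat p * of_nat q :: 4)"
  using tw_of_nat[of "p * q"] by simp

definition ipW :: "nat \<Rightarrow> nat \<Rightarrow> w \<Rightarrow> w \<Rightarrow> 4" where
  "ipW a b u v = (\<Sum>i<a. tw (fst u i * fst v i)) + (\<Sum>j<b. snd u j * snd v j)"

lemma ipW_add1: "ipW a b (u + u') v = ipW a b u v + ipW a b u' v"
  by (simp add: ipW_def distrib_right tw_add sum.distrib algebra_simps)
lemma ipW_sym: "ipW a b u v = ipW a b v u"
  by (simp add: ipW_def mult.commute)
lemma ipW_add2: "ipW a b v (u + u') = ipW a b v u + ipW a b v u'"
  by (metis ipW_add1 ipW_sym)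
lemma ipW_zero1[simp]: "ipW a b 0 v = 0"
  by (simp add: ipW_def)
lemma ipW_zero2[simp]: "ipW a b v 0 = 0"
  by (simp add: ipW_def)
lemma ipW_neg1: "ipW a b (- u) v = - ipW a b u v"
  by (metis add.right_inverse add_eq_0_iff2 ipW_add1 ipW_zero1)
lemma ipW_diff1: "ipW a b (u - u') v = ipW a b u v - ipW a b u' v"
  by (metis diff_conv_add_uminus ipW_add1 ipW_neg1)

lemma ipW_emb: "ipW a b (emb u) (emb v) = of_nat (z24_inner a b u v)"
  by (simp add: ipW_def emb_def z24_inner_def of_nat_mod4 tw_of_nat sum_distrib_left)

lemma inner_zero_iff: "z24_inner a b u v = 0 \<longleftrightarrow> ipW a b (emb u) (emb v) = 0"
proof -
  have "z24_inner a b u v < 4" by (simp add: z24_inner_def)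
  then show ?thesis unfolding ipW_emb using of_nat_inj4[of "z24_inner a b u v" 0] by simp
qed

definition dualW :: "nat \<Rightarrow> nat \<Rightarrow> w set \<Rightarrow> w set" where
  "dualW a b H = {v \<in> GW a b. \<forall>u\<in>H. ipW a b u v = 0}"

lemma subgrp_dual: "subgrp (dualW a b H)"
  by (auto simp: subgrp_def dualW_def ipW_add2)

definition eX :: "nat \<Rightarrow> w" where "eX i = ((\<lambda>k. if k = i then 1 else 0), 0)"
definition fZ :: "nat \<Rightarrow> w" where "fZ j = (0, (\<lambda>k. if k = j then 1 else 0))"

lemma ipW_eX: "i < a \<Longrightarrow> ipW a b (eX i) v = tw (fst v i)"
proof -
  assume i: "i < a"
  have h: "(\<lambda>k. tw (fst (eX i) k * fst v k)) = (\<lambda>k. if k = i then tw (fst v i) else 0)"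
    by (auto simp: eX_def fun_eq_iff)
  show ?thesis using i unfolding ipW_def h by (simp add: eX_def)
qed
lemma ipW_fZ: "j < b \<Longrightarrow> ipW a b (fZ j) v = snd v j"
proof -
  assume j: "j < b"
  have h: "(\<lambda>k. snd (fZ j) k * snd v k) = (\<lambda>k. if k = j then snd v j else 0)"
    by (auto simp: fZ_def fun_eq_iff)
  show ?thesis using j unfolding ipW_def h by (simp add: fZ_def)
qed
lemma eX_GW: "i < a \<Longrightarrow> eX i \<in> GW a b" by (simp add: GW_def eX_def)
lemma fZ_GW: "j < b \<Longrightarrow> fZ j \<in> GW a b" by (simp add: GW_def fZ_def)

lemma perp_GW: "u \<in> GW a b \<Longrightarrow> \<forall>v\<in>GW a b. ipW a b v u = 0 \<Longrightarrow> u = 0"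
proof -
  assume u: "u \<in> GW a b" and h: "\<forall>v\<in>GW a b. ipW a b v u = 0"
  have "fst u i = 0" for i
  proof (cases "i < a")
    case True
    have "ipW a b (eX i) u = 0" using h eX_GW[OF True, of b] by blast
    then show ?thesis using ipW_eX[OF True] by simp
  next
    case False then show ?thesis using u by (simp add: GW_def)
  qed
  moreover have "snd u j = 0" for j
  proof (cases "j < b")
    case True
    have "ipW a b (fZ j) u = 0" using h fZ_GW[OF True, of a] by blast
    then show ?thesis using ipW_fZ[OF True] by simp
  next
    case False then show ?thesis using u by (simp add: GW_def)
  qed
  ultimately show "u = 0" by (simp add: prod_eq_iff fun_eq_iff)
qed


definition om :: "4 \<Rightarrow> complex" where "om x = \<i> ^ conv4 x"

lemma i3: "\<i> ^ 3 = - \<i>" by (simp add: power3_eq_cube)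
lemma om_add: "om (x + y) = om x * om y"
  using z4_cases[of x] z4_cases[of y] by (auto simp: om_def conv4_def i3 complex_eq_iff)
lemma om_0[simp]: "om 0 = 1" by (simp add: om_def)
lemma om_eq1: "om x = 1 \<longleftrightarrow> x = 0"
  using z4_cases[of x] by (auto simp: om_def conv4_def i3 complex_eq_iff)

lemma finite_GW[simp]: "finite (GW a b)" using GW_card by blast

lemma translate_bij:
  assumes "subgrp H" "u0 \<in> H"
  shows "bij_betw (\<lambda>u. u0 + u) H H"
proof -
  have "inj_on (\<lambda>u. u0 + u) H" by (simp add: inj_on_def)
  moreover have "(\<lambda>u. u0 + u) ` H = H"
  proof
    show "(\<lambda>u. u0 + u) ` H \<subseteq> H" using assms subgrp_add by blast
    show "H \<subseteq> (\<lambda>u. u0 + u) ` H"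
    proof
      fix x assume "x \<in> H"
      then have "x - u0 \<in> H" using assms subgrp_diff by blast
      moreover have "x = u0 + (x - u0)" by simp
      ultimately show "x \<in> (\<lambda>u. u0 + u) ` H" by blast
    qed
  qed
  ultimately show ?thesis by (simp add: bij_betw_def)
qed

lemma charsum:
  assumes H: "subgrp H" "H \<subseteq> GW a b"
  shows "(\<Sum>u\<in>H. om (ipW a b u v)) = (if \<forall>u\<in>H. ipW a b u v = 0 then of_nat (card H) else 0)"
proof (cases "\<forall>u\<in>H. ipW a b u v = 0")
  case True then show ?thesis by simp
next
  case False
  then obtain u0 where u0: "u0 \<in> H" "ipW a b u0 v \<noteq> 0" by auto
  let ?S = "\<Sum>u\<in>H. om (ipW a b u v)"
  have "?S = (\<Sum>u\<in>H. om (ipW a b (u0 + u) v))"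
    using sum.reindex_bij_betw[OF translate_bij[OF H(1) u0(1)], of "\<lambda>u. om (ipW a b u v)"] by simp
  also have "\<dots> = om (ipW a b u0 v) * ?S" by (simp add: ipW_add1 om_add sum_distrib_left)
  finally have "(1 - om (ipW a b u0 v)) * ?S = 0" by (simp add: algebra_simps)
  moreover have "1 - om (ipW a b u0 v) \<noteq> 0" using u0(2) om_eq1 by auto
  ultimately have "?S = 0" by simp
  then show ?thesis using False by auto
qed

lemma duality:
  assumes H: "subgrp H" "H \<subseteq> GW a b"
  shows "card H * card (dualW a b H) = card (GW a b)"
proof -
  have finH: "finite H" using finite_subset[OF H(2) finite_GW] .
  have "(\<Sum>v\<in>GW a b. \<Sum>u\<in>H. om (ipW a b u v))
        = (\<Sum>v\<in>GW a b. if \<forall>u\<in>H. ipW a b u v = 0 then of_nat (card H) else 0)"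
    using charsum[OF H] by simp
  also have "\<dots> = (\<Sum>v\<in>dualW a b H. of_nat (card H))"
    unfolding dualW_def by (rule sum.inter_filter[symmetric]) simp
  also have "\<dots> = of_nat (card H * card (dualW a b H))" by simp
  finally have 1: "(\<Sum>v\<in>GW a b. \<Sum>u\<in>H. om (ipW a b u v)) = of_nat (card H * card (dualW a b H))" .
  have "(\<Sum>v\<in>GW a b. \<Sum>u\<in>H. om (ipW a b u v)) = (\<Sum>u\<in>H. \<Sum>v\<in>GW a b. om (ipW a b v u))"
    by (subst sum.swap) (simp add: ipW_sym)
  also have "\<dots> = (\<Sum>u\<in>H. if \<forall>v\<in>GW a b. ipW a b v u = 0 then of_nat (card (GW a b)) else 0)"
    using charsum[OF subgrp_GW order_refl] by simp
  also have "\<dots> = (\<Sum>u\<in>{u\<in>H. \<forall>v\<in>GW a b. ipW a b v u = 0}. of_nat (card (GW a b)))"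
    by (rule sum.inter_filter[symmetric]) (rule finH)
  also have "{u\<in>H. \<forall>v\<in>GW a b. ipW a b v u = 0} = {0}"
    using H perp_GW subgrp_zero by auto
  finally have 2: "(\<Sum>v\<in>GW a b. \<Sum>u\<in>H. om (ipW a b u v)) = of_nat (card (GW a b))" by simp
  from 1 2 show ?thesis by (metis of_nat_eq_iff)
qed


lemma gray_one_iff:
  assumes "p < 4" "q < 4"
  shows "((of_nat p :: 4) - of_nat q = 1 \<or> (of_nat p :: 4) - of_nat q = -1) \<longleftrightarrow>
         ((fst (gray p) \<noteq> fst (gray q)) \<noteq> (snd (gray p) \<noteq> snd (gray q)))"
proof -
  have "p \<in> {0,1,2,3}" "q \<in> {0,1,2,3}" using assms by auto
  then show ?thesis by (auto simp: gray_def)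
qed

lemma gray_inj: "p < 4 \<Longrightarrow> q < 4 \<Longrightarrow> gray p = gray q \<Longrightarrow> p = q"
proof -
  assume "p < 4" "q < 4" "gray p = gray q"
  moreover have "p \<in> {0,1,2,3}" "q \<in> {0,1,2,3}" using \<open>p<4\<close> \<open>q<4\<close> by auto
  ultimately show ?thesis by (auto simp: gray_def)
qed

lemma Gray_X: "i < a \<Longrightarrow> Gray a b x i = fst x i" by (simp add: Gray_def)
lemma Gray_Z0: "j < b \<Longrightarrow> Gray a b x (a + 2*j) = fst (gray (snd x j))" by (simp add: Gray_def)
lemma Gray_Z1: "j < b \<Longrightarrow> Gray a b x (Suc (a + 2*j)) = snd (gray (snd x j))" by (simp add: Gray_def)

lemma pos_cases: "a \<le> p \<Longrightarrow> p < a + 2*b \<Longrightarrow> \<exists>j<b. p = a + 2*j \<or> p = Suc (a + 2*j)"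
proof -
  assume "a \<le> p" "p < a + 2*b"
  then show ?thesis by (intro exI[of _ "(p - a) div 2"]) presburger
qed

lemma Gray_bin: "x \<in> Z24 a b \<Longrightarrow> Gray a b x \<in> binvecs (a + 2*b)"
proof -
  assume x: "x \<in> Z24 a b"
  have "snd x j < 4" for j using Z24_lt4[OF x] .
  then have "fst (gray (snd x j)) < 2" "snd (gray (snd x j)) < 2" for j by (auto simp: gray_def)
  then show ?thesis using Z24_lt2[OF x] by (auto simp: binvecs_def Gray_def)
qed

lemma Zeq_Gray: "j < b \<Longrightarrow> snd x j = snd y j \<Longrightarrow> p = a + 2*j \<or> p = Suc (a + 2*j) \<Longrightarrow> Gray a b x p = Gray a b y p"
  by (auto simp: Gray_Z0 Gray_Z1)

lemma Gray_Zeq: "x \<in> Z24 a b \<Longrightarrow> y \<in> Z24 a b \<Longrightarrow> j < b \<Longrightarrow>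
   Gray a b x (a + 2*j) = Gray a b y (a + 2*j) \<Longrightarrow> Gray a b x (Suc (a + 2*j)) = Gray a b y (Suc (a + 2*j))
   \<Longrightarrow> snd x j = snd y j"
  by (metis Gray_Z0 Gray_Z1 Z24_lt4 gray_inj prod_eq_iff)

lemma Z24_X0: "x \<in> Z24 a b \<Longrightarrow> a \<le> k \<Longrightarrow> fst x k = 0"
  by (auto simp: Z24_def binvecs_def)
lemma Z24_Z0: "x \<in> Z24 a b \<Longrightarrow> b \<le> k \<Longrightarrow> snd x k = 0"
  by (auto simp: Z24_def quatvecs_def)

lemma dX0: "x \<in> Z24 a b \<Longrightarrow> y \<in> Z24 a b \<Longrightarrow> fst (emb x - emb y) i = 0 \<longleftrightarrow> fst x i = fst y i"
  by (simp add: emb_def of_nat_inj2 Z24_lt2)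
lemma dX1: "x \<in> Z24 a b \<Longrightarrow> y \<in> Z24 a b \<Longrightarrow> fst x i \<noteq> fst y i \<Longrightarrow> fst (emb x - emb y) i = 1"
  using dX0[of x a b y i] z2_cases[of "fst (emb x - emb y) i"] by auto
lemma dZ0: "x \<in> Z24 a b \<Longrightarrow> y \<in> Z24 a b \<Longrightarrow> snd (emb x - emb y) j = 0 \<longleftrightarrow> snd x j = snd y j"
  by (simp add: emb_def of_nat_inj4 Z24_lt4)

definition EW :: "nat \<Rightarrow> nat \<Rightarrow> w set" where
  "EW a b = insert 0 (eX ` {..<a} \<union> fZ ` {..<b} \<union> (\<lambda>j. - fZ j) ` {..<b})"

definition gdiff :: "nat \<Rightarrow> nat \<Rightarrow> z24vec \<Rightarrow> z24vec \<Rightarrow> nat set" where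
  "gdiff a b x y = {p. p < a + 2*b \<and> Gray a b x p \<noteq> Gray a b y p}"

lemma hdist_gdiff: "hdist (a + 2*b) (Gray a b x) (Gray a b y) \<le> 1 \<longleftrightarrow> (\<forall>p\<in>gdiff a b x y. \<forall>q\<in>gdiff a b x y. p = q)"
proof -
  have "finite {p. p < a + 2*b \<and> Gray a b x p \<noteq> Gray a b y p}" by simp
  then show ?thesis unfolding hdist_def gdiff_def One_nat_def by (rule card_le_Suc0_iff_eq)
qed

lemma L_fwd:
  assumes x: "x \<in> Z24 a b" and y: "y \<in> Z24 a b"
    and U: "\<forall>p\<in>gdiff a b x y. \<forall>q\<in>gdiff a b x y. p = q"
  shows "emb x - emb y \<in> EW a b"
proof -
  let ?d = "emb x - emb y"
  have inD: "p \<in> gdiff a b x y \<longleftrightarrow> p < a + 2*b \<and> Gray a b x p \<noteq> Gray a b y p" for p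
    by (simp add: gdiff_def)
  show ?thesis
  proof (cases "\<exists>i<a. fst x i \<noteq> fst y i")
    case True
    then obtain i where i: "i < a" "fst x i \<noteq> fst y i" by blast
    have iD: "i \<in> gdiff a b x y" using i by (simp add: inD Gray_X)
    have "fst ?d k = (if k = i then 1 else 0)" for k
    proof (cases "k = i")
      case True then show ?thesis using dX1[OF x y] i by simp
    next
      case False
      have "fst x k = fst y k"
      proof (cases "k < a")
        case True
        then have "k \<notin> gdiff a b x y" using U iD False by blast
        then show ?thesis using True by (simp add: inD Gray_X)
      next
        case False then show ?thesis using Z24_X0[OF x] Z24_X0[OF y] by simp
      qed
      then show ?thesis using dX0[OF x y] False by simp
    qed
    moreover have "snd ?d j = 0" for j
    proof (cases "j < b")
      case True
      have n0: "a + 2*j \<notin> gdiff a b x y" "Suc (a + 2*j) \<notin> gdiff a b x y" using U iD i(1) by force+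
      then have "snd x j = snd y j" using Gray_Zeq[OF x y True] True by (simp add: inD)
      then show ?thesis using dZ0[OF x y] by simp
    next
      case False then show ?thesis using Z24_Z0[OF x] Z24_Z0[OF y] by (simp add: emb_def)
    qed
    ultimately have "?d = eX i" by (simp add: eX_def prod_eq_iff fun_eq_iff)
    then show ?thesis using i by (simp add: EW_def)
  next
    case noX: False
    then have Xeq: "fst x k = fst y k" for k
      using Z24_X0[OF x] Z24_X0[OF y] by (cases "k < a") auto
    then have fd: "fst ?d = 0" using dX0[OF x y] by (simp add: fun_eq_iff)
    show ?thesis
    proof (cases "\<exists>j<b. snd x j \<noteq> snd y j")
      case True
      then obtain j where j: "j < b" "snd x j \<noteq> snd y j" by blast
      have "\<not> (Gray a b x (a + 2*j) = Gray a b y (a + 2*j) \<and> Gray a b x (Suc (a + 2*j)) = Gray a b y (Suc (a + 2*j)))"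
        using Gray_Zeq[OF x y j(1)] j(2) by blast
      moreover have lt: "a + 2*j < a + 2*b" "Suc (a + 2*j) < a + 2*b" using j(1) by auto
      ultimately have "a + 2*j \<in> gdiff a b x y \<or> Suc (a + 2*j) \<in> gdiff a b x y" by (auto simp: inD)
      then obtain p0 where p0: "p0 = a + 2*j \<or> p0 = Suc (a + 2*j)" "p0 \<in> gdiff a b x y"
        by blast
      have others: "snd x k = snd y k" if "k \<noteq> j" for k
      proof (cases "k < b")
        case True
        have ne1: "a + 2*k \<noteq> p0" using p0(1) that by presburger
        have ne2: "Suc (a + 2*k) \<noteq> p0" using p0(1) that by presburger
        have "a + 2*k \<notin> gdiff a b x y" using U p0(2) ne1 by blast
        moreover have "Suc (a + 2*k) \<notin> gdiff a b x y" using U p0(2) ne2 by blast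
        ultimately show ?thesis using Gray_Zeq[OF x y True] True by (simp add: inD)
      next
        case False then show ?thesis using Z24_Z0[OF x] Z24_Z0[OF y] by simp
      qed
      have notboth: "\<not> (a + 2*j \<in> gdiff a b x y \<and> Suc (a + 2*j) \<in> gdiff a b x y)"
      proof
        assume "a + 2*j \<in> gdiff a b x y \<and> Suc (a + 2*j) \<in> gdiff a b x y"
        then have "a + 2*j = Suc (a + 2*j)" using U by blast
        then show False by simp
      qed
      have A: "a + 2*j \<in> gdiff a b x y \<longleftrightarrow> fst (gray (snd x j)) \<noteq> fst (gray (snd y j))"
        using lt j(1) by (simp add: inD Gray_Z0)
      have B: "Suc (a + 2*j) \<in> gdiff a b x y \<longleftrightarrow> snd (gray (snd x j)) \<noteq> snd (gray (snd y j))"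
        using lt j(1) by (simp add: inD Gray_Z1)
      have xor: "(fst (gray (snd x j)) \<noteq> fst (gray (snd y j))) \<noteq> (snd (gray (snd x j)) \<noteq> snd (gray (snd y j)))"
        using notboth p0 A B by blast
      have dj: "snd ?d j = 1 \<or> snd ?d j = -1"
        using gray_one_iff[OF Z24_lt4[OF x] Z24_lt4[OF y]] xor by (simp add: emb_def)
      have dk: "snd ?d k = 0" if "k \<noteq> j" for k using others[OF that] dZ0[OF x y] by simp
      have "?d = fZ j \<or> ?d = - fZ j"
      proof (cases "snd ?d j = 1")
        case True
        have "snd ?d = snd (fZ j)"
        proof
          fix k show "snd ?d k = snd (fZ j) k" using True dk[of k] by (cases "k = j") (simp_all add: fZ_def)
        qed
        moreover have "fst ?d = fst (fZ j)" using fd by (simp add: fZ_def)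
        ultimately show ?thesis by (simp add: prod_eq_iff)
      next
        case False
        then have m: "snd ?d j = -1" using dj by simp
        have "snd ?d = snd (- fZ j)"
        proof
          fix k show "snd ?d k = snd (- fZ j) k" using m dk[of k] by (cases "k = j") (simp_all add: fZ_def)
        qed
        moreover have "fst ?d = fst (- fZ j)" using fd by (simp add: fZ_def)
        ultimately show ?thesis by (simp add: prod_eq_iff)
      qed
      then show ?thesis using j(1) by (auto simp: EW_def)
    next
      case False
      then have "snd x k = snd y k" for k
        using Z24_Z0[OF x] Z24_Z0[OF y] by (cases "k < b") auto
      then have "snd ?d = 0" using dZ0[OF x y] by (simp add: fun_eq_iff)
      then have "?d = 0" using fd by (simp add: prod_eq_iff)
      then show ?thesis by (simp add: EW_def)
    qed
  qed
qed

lemma fZ_cases: "d = fZ j \<or> d = - fZ j \<Longrightarrow> fst d = 0 \<and> (\<forall>k. k \<noteq> j \<longrightarrow> snd d k = 0) \<and> (snd d j = 1 \<or> snd d j = -1)"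
  by (auto simp: fZ_def)

lemma L_bwd:
  assumes x: "x \<in> Z24 a b" and y: "y \<in> Z24 a b"
    and E: "emb x - emb y \<in> EW a b"
  shows "\<forall>p\<in>gdiff a b x y. \<forall>q\<in>gdiff a b x y. p = q"
proof -
  let ?d = "emb x - emb y"
  have inD: "p \<in> gdiff a b x y \<longleftrightarrow> p < a + 2*b \<and> Gray a b x p \<noteq> Gray a b y p" for p
    by (simp add: gdiff_def)
  from E consider "?d = 0" | i where "i < a" "?d = eX i" | j where "j < b" "?d = fZ j \<or> ?d = - fZ j"
    unfolding EW_def by blast
  then show ?thesis
  proof cases
    case 1
    then have "emb x = emb y" by simp
    then have "x = y" using emb_inj x y by (metis inj_onD)
    then show ?thesis by (simp add: gdiff_def)
  next
    case (2 i)
    have X: "fst x k = fst y k" if "k \<noteq> i" for k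
      using dX0[OF x y, of k] 2 that by (simp add: eX_def)
    have Z: "snd x k = snd y k" for k
      using dZ0[OF x y, of k] 2 by (simp add: eX_def)
    have "p = i" if pG: "p \<in> gdiff a b x y" for p
    proof (cases "p < a")
      case True
      then show ?thesis using pG X[of p] by (auto simp: inD Gray_X)
    next
      case False
      then obtain j where "j < b" "p = a + 2*j \<or> p = Suc (a + 2*j)"
        using pos_cases[of a p b] pG by (auto simp: inD)
      then have "Gray a b x p = Gray a b y p" using Zeq_Gray Z by blast
      then show ?thesis using pG by (simp add: inD)
    qed
    then show ?thesis by blast
  next
    case (3 j)
    have fc: "fst ?d = 0 \<and> (\<forall>k. k \<noteq> j \<longrightarrow> snd ?d k = 0) \<and> (snd ?d j = 1 \<or> snd ?d j = -1)"
      by (rule fZ_cases[OF 3(2)])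
    have fd: "fst ?d = 0" using fc by blast
    have X: "fst x k = fst y k" for k using dX0[OF x y, of k] fd by simp
    have Z: "snd x k = snd y k" if "k \<noteq> j" for k
      using dZ0[OF x y, of k] fc that by blast
    have dj: "snd ?d j = 1 \<or> snd ?d j = -1" using fc by blast
    then have xor: "(fst (gray (snd x j)) \<noteq> fst (gray (snd y j))) \<noteq> (snd (gray (snd x j)) \<noteq> snd (gray (snd y j)))"
      using gray_one_iff[OF Z24_lt4[OF x] Z24_lt4[OF y]] by (simp add: emb_def)
    have pos: "p = a + 2*j \<or> p = Suc (a + 2*j)" if pG: "p \<in> gdiff a b x y" for p
    proof (cases "p < a")
      case True
      then show ?thesis using pG X[of p] by (auto simp: inD Gray_X)
    next
      case False
      then obtain k where k: "k < b" "p = a + 2*k \<or> p = Suc (a + 2*k)"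
        using pos_cases[of a p b] pG by (auto simp: inD)
      show ?thesis
      proof (cases "k = j")
        case True then show ?thesis using k by simp
      next
        case False
        then have "Gray a b x p = Gray a b y p" using Zeq_Gray Z k by blast
        then show ?thesis using pG by (simp add: inD)
      qed
    qed
    have A: "a + 2*j \<in> gdiff a b x y \<longleftrightarrow> fst (gray (snd x j)) \<noteq> fst (gray (snd y j))"
      using 3(1) by (simp add: inD Gray_Z0)
    have B: "Suc (a + 2*j) \<in> gdiff a b x y \<longleftrightarrow> snd (gray (snd x j)) \<noteq> snd (gray (snd y j))"
      using 3(1) by (simp add: inD Gray_Z1)
    show ?thesis
    proof (intro ballI)
      fix p q assume p: "p \<in> gdiff a b x y" and q: "q \<in> gdiff a b x y"
      have "\<not> (a + 2*j \<in> gdiff a b x y \<and> Suc (a + 2*j) \<in> gdiff a b x y)" using A B xor by blast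
      then show "p = q" using pos[OF p] pos[OF q] p q by auto
    qed
  qed
qed

lemma L_iff:
  assumes "x \<in> Z24 a b" "y \<in> Z24 a b"
  shows "hdist (a + 2*b) (Gray a b x) (Gray a b y) \<le> 1 \<longleftrightarrow> emb x - emb y \<in> EW a b"
  using L_fwd[OF assms] L_bwd[OF assms] hdist_gdiff by blast

lemma Gray_inj: "inj_on (Gray a b) (Z24 a b)"
proof (rule inj_onI)
  fix x y assume x: "x \<in> Z24 a b" and y: "y \<in> Z24 a b" and e: "Gray a b x = Gray a b y"
  then have "hdist (a + 2*b) (Gray a b x) (Gray a b y) \<le> 1" by (simp add: hdist_def)
  then have "emb x - emb y \<in> EW a b" using L_iff[OF x y] by simp
  have "gdiff a b x y = {}" using e by (simp add: gdiff_def)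
  show "x = y"
  proof -
    have "fst x i = fst y i" for i
    proof (cases "i < a")
      case True then show ?thesis using e Gray_X[OF True, of b] by metis
    next
      case False then show ?thesis using Z24_X0[OF x] Z24_X0[OF y] by simp
    qed
    moreover have "snd x j = snd y j" for j
    proof (cases "j < b")
      case True then show ?thesis using Gray_Zeq[OF x y True] e by simp
    next
      case False then show ?thesis using Z24_Z0[OF x] Z24_Z0[OF y] by simp
    qed
    ultimately show ?thesis by (simp add: prod_eq_iff fun_eq_iff)
  qed
qed


lemma card_fibers_const:
  assumes "finite S" "\<forall>x\<in>S. card {y\<in>S. f y = f x} = k"
  shows "card S = card (f ` S) * k"
proof -
  have S: "S = (\<Union>t\<in>f ` S. {y\<in>S. f y = t})" by auto
  have "card S = (\<Sum>t\<in>f ` S. card {y\<in>S. f y = t})"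
    by (subst S, rule card_UN_disjoint) (use assms(1) in auto)
  also have "\<dots> = (\<Sum>t\<in>f ` S. k)"
    by (rule sum.cong) (use assms(2) in auto)
  finally show ?thesis by simp
qed

lemma card_hom:
  fixes f :: "w \<Rightarrow> 'b::ab_group_add"
  assumes H: "subgrp H" "finite H" and f: "\<And>x y. f (x + y) = f x + f y"
  shows "card H = card (f ` H) * card {x\<in>H. f x = 0}"
proof (rule card_fibers_const[OF H(2)], intro ballI)
  fix x0 assume x0: "x0 \<in> H"
  have fd: "f (u - v) = f u - f v" for u v
    using f[of "u - v" v] by (simp add: algebra_simps)
  have "{y\<in>H. f y = f x0} = (\<lambda>z. x0 + z) ` {x\<in>H. f x = 0}"
  proof
    show "{y\<in>H. f y = f x0} \<subseteq> (\<lambda>z. x0 + z) ` {x\<in>H. f x = 0}"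
    proof
      fix y assume y: "y \<in> {y\<in>H. f y = f x0}"
      then have "y - x0 \<in> {x\<in>H. f x = 0}" using subgrp_diff[OF H(1) _ x0] fd by auto
      moreover have "y = x0 + (y - x0)" by simp
      ultimately show "y \<in> (\<lambda>z. x0 + z) ` {x\<in>H. f x = 0}" by blast
    qed
    show "(\<lambda>z. x0 + z) ` {x\<in>H. f x = 0} \<subseteq> {y\<in>H. f y = f x0}"
    proof
      fix y assume "y \<in> (\<lambda>z. x0 + z) ` {x\<in>H. f x = 0}"
      then obtain z where z: "z \<in> H" "f z = 0" "y = x0 + z" by blast
      then show "y \<in> {y\<in>H. f y = f x0}" using subgrp_add[OF H(1) x0 z(1)] f[of x0 z] by simp
    qed
  qed
  moreover have "inj_on (\<lambda>z. x0 + z) {x\<in>H. f x = 0}" by (simp add: inj_on_def)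
  ultimately show "card {y\<in>H. f y = f x0} = card {x\<in>H. f x = 0}" by (simp add: card_image)
qed

lemma EW_GW: "EW a b \<subseteq> GW a b"
  by (auto simp: EW_def eX_GW fZ_GW)

lemma eX_ne0: "eX i \<noteq> 0"
proof
  assume "eX i = 0" then have "fst (eX i) i = 0" by simp
  then show False by (simp add: eX_def)
qed

lemma one_ne_neg_one4: "(1::4) \<noteq> -1" by simp

lemma EW_card: "card (EW a b) = 1 + a + 2 * b"
proof -
  let ?A = "eX ` {..<a}" and ?B = "fZ ` {..<b}" and ?B' = "(\<lambda>j. - fZ j) ` {..<b}"
  have injA: "inj_on eX {..<a}"
  proof (rule inj_onI)
    fix i k assume "eX i = eX k"
    then have "fst (eX i) i = fst (eX k) i" by simp
    then show "i = k" by (simp add: eX_def split: if_splits)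
  qed
  have injB: "inj_on fZ {..<b}"
  proof (rule inj_onI)
    fix i k assume "fZ i = fZ k"
    then have "snd (fZ i) i = snd (fZ k) i" by simp
    then show "i = k" by (simp add: fZ_def split: if_splits)
  qed
  have injB': "inj_on (\<lambda>j. - fZ j) {..<b}"
    using injB by (simp add: inj_on_def)
  have d1: "?A \<inter> ?B = {}"
  proof (rule ccontr)
    assume "?A \<inter> ?B \<noteq> {}"
    then obtain x where "x \<in> ?A" "x \<in> ?B" by blast
    then obtain i j where "x = eX i" "x = fZ j" by blast
    then have "eX i = fZ j" by simp
    then have "fst (eX i) i = fst (fZ j) i" by simp
    then show False by (simp add: eX_def fZ_def)
  qed
  have d2: "(?A \<union> ?B) \<inter> ?B' = {}"
  proof (rule ccontr)
    assume "(?A \<union> ?B) \<inter> ?B' \<noteq> {}"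
    then obtain x where x0: "x \<in> ?A \<union> ?B" "x \<in> ?B'" by blast
    then obtain j where "x = - fZ j" by blast
    with x0 have x: "x \<in> ?A \<union> ?B" "x = - fZ j" by auto
    from x(1) show False
    proof
      assume "x \<in> ?A"
      then obtain i where "eX i = - fZ j" using x(2) by auto
      then have "fst (eX i) i = fst (- fZ j) i" by simp
      then show False by (simp add: eX_def fZ_def)
    next
      assume "x \<in> ?B"
      then obtain k where "fZ k = - fZ j" using x(2) by auto
      then have "snd (fZ k) k = snd (- fZ j) k" by simp
      then show False by (simp add: fZ_def split: if_splits)
    qed
  qed
  have n0: "0 \<notin> ?A \<union> ?B \<union> ?B'"
  proof
    assume "0 \<in> ?A \<union> ?B \<union> ?B'"
    then show False
    proof (elim UnE)
      assume "0 \<in> ?A" then show False using eX_ne0 by auto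
    next
      assume "0 \<in> ?B" then obtain k where "fZ k = 0" by auto
      then have "snd (fZ k) k = 0" by simp
      then show False by (simp add: fZ_def)
    next
      assume "0 \<in> ?B'" then obtain k where "- fZ k = 0" by auto
      then have "fZ k = 0" by simp
      then have "snd (fZ k) k = 0" by simp
      then show False by (simp add: fZ_def)
    qed
  qed
  have "card (EW a b) = Suc (card (?A \<union> ?B \<union> ?B'))"
    unfolding EW_def using n0 by (simp add: card_insert_if)
  also have "card (?A \<union> ?B \<union> ?B') = card (?A \<union> ?B) + card ?B'"
    using d2 by (simp add: card_Un_disjoint)
  also have "card (?A \<union> ?B) = card ?A + card ?B"
    using d1 by (simp add: card_Un_disjoint)
  finally show ?thesis using injA injB injB' by (simp add: card_image)
qed


locale P34 =
  fixes r a b :: nat and C :: "z24vec set"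
  assumes r2: "2 \<le> r" and a_eq: "a = 2^r - 1" and b_eq: "b = 2^(r-1) * (2^r - 1)"
    and addC: "z24_additive a b C" and perf: "z24_perfect1 a b C"
begin

definition "CW = emb ` C"
definition "DW = dualW a b CW"

lemma C_Z24: "C \<subseteq> Z24 a b" using addC by (simp add: z24_additive_def)
lemma CW_GW: "CW \<subseteq> GW a b" using C_Z24 emb_in unfolding CW_def by blast
lemma finite_CW: "finite CW" using finite_subset[OF CW_GW finite_GW] .
lemma subgrp_CW: "subgrp CW"
proof -
  have "z24_zero \<in> C" using addC by (simp add: z24_additive_def)
  then have "0 \<in> CW" unfolding CW_def using emb_zero by (metis image_eqI)
  moreover have "x + y \<in> CW" if xy: "x \<in> CW" "y \<in> CW" for x y
  proof -
    obtain x' where "x' \<in> C" "x = emb x'" using xy(1) unfolding CW_def by blast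
    moreover obtain y' where "y' \<in> C" "y = emb y'" using xy(2) unfolding CW_def by blast
    moreover have "z24_add x' y' \<in> C" using addC calculation by (simp add: z24_additive_def)
    ultimately show ?thesis unfolding CW_def using emb_add by (metis image_eqI)
  qed
  ultimately show ?thesis by (simp add: subgrp_def)
qed
lemma DW_GW: "DW \<subseteq> GW a b" by (auto simp: DW_def dualW_def)
lemma finite_DW: "finite DW" using finite_subset[OF DW_GW finite_GW] .
lemma subgrp_DW: "subgrp DW" unfolding DW_def by (rule subgrp_dual)

lemma tiling: "w \<in> GW a b \<Longrightarrow> \<exists>!c. c \<in> CW \<and> w - c \<in> EW a b"
proof -
  assume w: "w \<in> GW a b"
  define x where "x = unemb w"
  have x: "x \<in> Z24 a b" "emb x = w" using w unemb_in by (auto simp: x_def)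
  have "\<exists>!c'. c' \<in> Gray a b ` C \<and> hdist (a+2*b) (Gray a b x) c' \<le> 1"
    using perf Gray_bin[OF x(1)] by (simp add: z24_perfect1_def perfect1_def)
  then obtain c' where c': "c' \<in> Gray a b ` C" "hdist (a+2*b) (Gray a b x) c' \<le> 1"
    and uq: "\<And>c''. c'' \<in> Gray a b ` C \<Longrightarrow> hdist (a+2*b) (Gray a b x) c'' \<le> 1 \<Longrightarrow> c'' = c'"
    by blast
  obtain c where c: "c \<in> C" "c' = Gray a b c" using c'(1) by blast
  have cZ: "c \<in> Z24 a b" using c(1) C_Z24 by blast
  have ex: "emb c \<in> CW \<and> w - emb c \<in> EW a b"
    using L_iff[OF x(1) cZ] c c'(2) x(2) by (auto simp: CW_def)
  have un: "cw = emb c" if cw: "cw \<in> CW \<and> w - cw \<in> EW a b" for cw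
  proof -
    obtain c2 where c2: "c2 \<in> C" "cw = emb c2" using cw unfolding CW_def by blast
    have c2Z: "c2 \<in> Z24 a b" using c2(1) C_Z24 by blast
    have "hdist (a+2*b) (Gray a b x) (Gray a b c2) \<le> 1"
      using L_iff[OF x(1) c2Z] cw c2 x(2) by simp
    then have "Gray a b c2 = Gray a b c" using uq c2(1) c(2) by blast
    then have "c2 = c" using Gray_inj[of a b] c2Z cZ by (metis inj_onD)
    then show ?thesis using c2 by simp
  qed
  show ?thesis using ex un by blast
qed

lemma tiling2: "w \<in> GW a b \<Longrightarrow> \<exists>!e. e \<in> EW a b \<and> w - e \<in> CW"
proof -
  assume w: "w \<in> GW a b"
  from tiling[OF w] obtain c where c: "c \<in> CW" "w - c \<in> EW a b"
    and u: "\<And>c'. c' \<in> CW \<and> w - c' \<in> EW a b \<Longrightarrow> c' = c" by blast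
  show ?thesis
  proof (rule ex1I[of _ "w - c"])
    show "w - c \<in> EW a b \<and> w - (w - c) \<in> CW" using c by simp
  next
    fix e assume e: "e \<in> EW a b \<and> w - e \<in> CW"
    then have "w - e = c" using u[of "w - e"] by simp
    then show "e = w - c" by (simp add: algebra_simps)
  qed
qed

lemma card_tiling: "card (GW a b) = card CW * card (EW a b)"
proof -
  have "bij_betw (\<lambda>(c, e). c + e) (CW \<times> EW a b) (GW a b)"
  proof (rule bij_betw_imageI)
    show "inj_on (\<lambda>(c, e). c + e) (CW \<times> EW a b)"
    proof (rule inj_onI, clarify)
      fix c e c' e' assume h: "c \<in> CW" "e \<in> EW a b" "c' \<in> CW" "e' \<in> EW a b" "c + e = c' + e'"
      have "c \<in> GW a b" "e \<in> GW a b" using h(1,2) CW_GW EW_GW by blast+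
      then have w: "c + e \<in> GW a b" by simp
      have "c = c'" using tiling[OF w] h by (metis add_diff_cancel_left' add_diff_cancel_right')
      then show "c = c' \<and> e = e'" using h(5) by simp
    qed
    show "(\<lambda>(c, e). c + e) ` (CW \<times> EW a b) = GW a b"
    proof
      show "(\<lambda>(c, e). c + e) ` (CW \<times> EW a b) \<subseteq> GW a b"
      proof (rule image_subsetI, clarify)
        fix c e assume "c \<in> CW" "e \<in> EW a b"
        then have "c \<in> GW a b" "e \<in> GW a b" using CW_GW EW_GW by blast+
        then show "c + e \<in> GW a b" by simp
      qed
      show "GW a b \<subseteq> (\<lambda>(c, e). c + e) ` (CW \<times> EW a b)"
      proof
        fix w assume "w \<in> GW a b"
        then obtain c where "c \<in> CW" "w - c \<in> EW a b" using tiling by blast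
        moreover have "w = (\<lambda>(c, e). c + e) (c, w - c)" by simp
        ultimately show "w \<in> (\<lambda>(c, e). c + e) ` (CW \<times> EW a b)" by blast
      qed
    qed
  qed
  then have "card (CW \<times> EW a b) = card (GW a b)" by (rule bij_betw_same_card)
  then show ?thesis by (simp add: card_cartesian_product)
qed

lemma arith: "1 + a + 2 * b = 4 ^ r" "1 + a = 2 ^ r"
proof -
  have r1: "r = Suc (r - 1)" using r2 by simp
  have t: "2 * 2^(r-1) = (2::nat)^r" by (subst (2) r1) simp
  have t1: "(2::nat)^r \<ge> 1" by simp
  have "1 + a + 2 * b = 2^r + 2^r * (2^r - 1)" using t t1 by (simp add: a_eq b_eq)
  also have "\<dots> = 2^r * 2^r" using t1 by (simp add: algebra_simps)
  also have "\<dots> = (4::nat)^r" by (simp add: power_mult_distrib[symmetric])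
  finally show "1 + a + 2 * b = 4 ^ r" .
  show "1 + a = 2 ^ r" using t1 by (simp add: a_eq)
qed

lemma card_EW: "card (EW a b) = 4 ^ r" using EW_card arith by simp

lemma card_DW: "card DW = 4 ^ r"
proof -
  have "card CW * card DW = card (GW a b)" unfolding DW_def by (rule duality[OF subgrp_CW CW_GW])
  then have "card CW * card DW = card CW * 4 ^ r" using card_tiling card_EW by simp
  moreover have "card CW \<noteq> 0" using finite_CW subgrp_zero[OF subgrp_CW] by auto
  ultimately show ?thesis by simp
qed

lemma dual_DW: "dualW a b DW = CW"
proof -
  have "card DW * card (dualW a b DW) = card (GW a b)" by (rule duality[OF subgrp_DW DW_GW])
  also have "\<dots> = card CW * card DW" using card_tiling card_EW card_DW by simp
  finally have eq: "card (dualW a b DW) = card CW" using card_DW by simp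
  have sub: "CW \<subseteq> dualW a b DW"
    using CW_GW by (auto simp: dualW_def DW_def ipW_sym)
  have "finite (dualW a b DW)" using finite_subset[of "dualW a b DW" "GW a b"] by (auto simp: dualW_def)
  then show ?thesis using card_subset_eq[OF _ sub] eq by simp
qed

end


lemma inj_eX: "inj_on eX A"
proof (rule inj_onI)
  fix i k assume "eX i = eX k"
  then have "fst (eX i) i = fst (eX k) i" by simp
  then show "i = k" by (simp add: eX_def split: if_splits)
qed

lemma eX_eX: "eX i + eX i = 0"
  by (simp add: eX_def prod_eq_iff fun_eq_iff)

lemma neg_eX: "- eX i = eX i"
  by (simp add: eX_def prod_eq_iff fun_eq_iff)

lemma fZ_fZ_ne0: "fZ j + fZ j \<noteq> 0"
proof
  assume "fZ j + fZ j = 0"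
  then have "snd (fZ j + fZ j) j = 0" by simp
  then show False by (simp add: fZ_def)
qed

context P34
begin

definition "hE w = (THE e. e \<in> EW a b \<and> w - e \<in> CW)"

lemma hE_prop: "w \<in> GW a b \<Longrightarrow> hE w \<in> EW a b \<and> w - hE w \<in> CW"
  unfolding hE_def by (rule theI'[OF tiling2])

lemma hE_uniq: "w \<in> GW a b \<Longrightarrow> e \<in> EW a b \<Longrightarrow> w - e \<in> CW \<Longrightarrow> hE w = e"
  unfolding hE_def by (rule the1_equality[OF tiling2]) auto

definition "E2 = insert 0 (eX ` {..<a})"

lemma E2_EW: "E2 \<subseteq> EW a b" by (auto simp: E2_def EW_def)

lemma card_E2: "card E2 = 2 ^ r"
proof -
  have "0 \<notin> eX ` {..<a}" using eX_ne0 by fastforce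
  then have "card E2 = Suc (card (eX ` {..<a}))" by (simp add: E2_def)
  also have "card (eX ` {..<a}) = a" using inj_eX by (simp add: card_image)
  finally show ?thesis using arith(2) by simp
qed

lemma fZ2_notC: "j < b \<Longrightarrow> fZ j + fZ j \<notin> CW"
proof
  assume j: "j < b" and c: "fZ j + fZ j \<in> CW"
  have w: "fZ j \<in> GW a b" using fZ_GW[OF j] .
  have "fZ j - 0 \<in> EW a b" using j by (simp add: EW_def)
  moreover have "fZ j - (fZ j + fZ j) \<in> EW a b" using j by (simp add: EW_def)
  moreover have "0 \<in> CW" using subgrp_CW subgrp_zero by blast
  ultimately have "0 = fZ j + fZ j" using tiling[OF w] c by (metis (no_types, lifting))
  then show False using fZ_fZ_ne0 by metis
qed

lemma dbl_iff: "e \<in> EW a b \<Longrightarrow> (e + e \<in> CW \<longleftrightarrow> e \<in> E2)"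
proof -
  assume e: "e \<in> EW a b"
  have z: "0 \<in> CW" using subgrp_CW subgrp_zero by blast
  show ?thesis
  proof
    assume "e \<in> E2"
    then have "e + e = 0" unfolding E2_def using eX_eX by auto
    then show "e + e \<in> CW" using z by simp
  next
    assume ee: "e + e \<in> CW"
    show "e \<in> E2"
    proof (rule ccontr)
      assume "e \<notin> E2"
      then have "e \<in> fZ ` {..<b} \<union> (\<lambda>j. - fZ j) ` {..<b}" using e unfolding EW_def E2_def by blast
      then obtain j where j: "j < b" "e = fZ j \<or> e = - fZ j" by blast
      from j(2) show False
      proof
        assume "e = fZ j" then show False using fZ2_notC[OF j(1)] ee by simp
      next
        assume "e = - fZ j"
        then have "- (e + e) = fZ j + fZ j" by simp
        moreover have "- (e + e) \<in> CW" using subgrp_neg[OF subgrp_CW ee] .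
        ultimately show False using fZ2_notC[OF j(1)] by simp
      qed
    qed
  qed
qed

lemma P2: "w \<in> GW a b \<Longrightarrow> hE (w + w) \<in> E2"
proof -
  assume w: "w \<in> GW a b"
  have ww: "w + w \<in> GW a b" using w by simp
  define e where "e = hE (w + w)"
  have e: "e \<in> EW a b" "(w + w) - e \<in> CW" using hE_prop[OF ww] by (auto simp: e_def)
  define c where "c = (w + w) - e"
  have c: "c \<in> CW" using e by (simp add: c_def)
  have "- c - c = e + e - (w + w + w + w)" by (simp add: c_def algebra_simps)
  then have "e + e = - c - c" using w_four[of w] by simp
  moreover have "- c - c \<in> CW" using subgrp_diff[OF subgrp_CW subgrp_neg[OF subgrp_CW c] c] .
  ultimately have "e + e \<in> CW" by simp
  then show ?thesis using dbl_iff[OF e(1)] by (simp add: e_def)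
qed

definition "K2 = {y \<in> GW a b. y + y \<in> CW}"

lemma card_K2: "card K2 = card CW * card E2"
proof -
  have "bij_betw (\<lambda>(c, e). c + e) (CW \<times> E2) K2"
  proof (rule bij_betw_imageI)
    show "inj_on (\<lambda>(c, e). c + e) (CW \<times> E2)"
    proof (rule inj_onI, clarify)
      fix c e c' e' assume h: "c \<in> CW" "e \<in> E2" "c' \<in> CW" "e' \<in> E2" "c + e = c' + e'"
      have "c \<in> GW a b" "e \<in> GW a b" using h(1,2) CW_GW E2_EW EW_GW by blast+
      then have w: "c + e \<in> GW a b" by simp
      have ee: "e \<in> EW a b" "e' \<in> EW a b" using h(2,4) E2_EW by blast+
      have "hE (c + e) = e" using hE_uniq[OF w ee(1)] h(1) by simp
      moreover have "hE (c + e) = e'" using hE_uniq[OF w ee(2)] h(3,5) by simp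
      ultimately have "e = e'" by simp
      then show "c = c' \<and> e = e'" using h(5) by simp
    qed
    show "(\<lambda>(c, e). c + e) ` (CW \<times> E2) = K2"
    proof
      show "(\<lambda>(c, e). c + e) ` (CW \<times> E2) \<subseteq> K2"
      proof (rule image_subsetI, clarify)
        fix c e assume h: "c \<in> CW" "e \<in> E2"
        then have "c \<in> GW a b" "e \<in> GW a b" using CW_GW E2_EW EW_GW by blast+
        then have g: "c + e \<in> GW a b" by simp
        have "e + e \<in> CW" using h(2) dbl_iff E2_EW by blast
        moreover have "c + c \<in> CW" using h(1) subgrp_add[OF subgrp_CW] by blast
        ultimately have "(c + c) + (e + e) \<in> CW" using subgrp_add[OF subgrp_CW] by blast
        moreover have eq: "(c + e) + (c + e) = (c + c) + (e + e)" by (simp add: algebra_simps)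
        ultimately have "(c + e) + (c + e) \<in> CW" by (subst eq)
        then show "c + e \<in> K2" using g by (simp add: K2_def)
      qed
      show "K2 \<subseteq> (\<lambda>(c, e). c + e) ` (CW \<times> E2)"
      proof
        fix y assume y: "y \<in> K2"
        then have yG: "y \<in> GW a b" and yy: "y + y \<in> CW" by (auto simp: K2_def)
        define e where "e = hE y"
        have e: "e \<in> EW a b" "y - e \<in> CW" using hE_prop[OF yG] by (auto simp: e_def)
        have "(y + y) - ((y - e) + (y - e)) \<in> CW"
          using subgrp_diff[OF subgrp_CW yy subgrp_add[OF subgrp_CW e(2) e(2)]] .
        moreover have "(y + y) - ((y - e) + (y - e)) = e + e" by (simp add: algebra_simps)
        ultimately have "e \<in> E2" using dbl_iff[OF e(1)] by simp
        moreover have "y = (\<lambda>(c, e). c + e) (y - e, e)" by simp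
        ultimately show "y \<in> (\<lambda>(c, e). c + e) ` (CW \<times> E2)" using e(2) by blast
      qed
    qed
  qed
  then have "card (CW \<times> E2) = card K2" by (rule bij_betw_same_card)
  then show ?thesis by (simp add: card_cartesian_product)
qed

lemma phi_image: "(\<lambda>w. hE (w + w)) ` GW a b = E2"
proof -
  let ?phi = "\<lambda>w. hE (w + w)"
  have fib: "card {y \<in> GW a b. ?phi y = ?phi w0} = card K2" if w0: "w0 \<in> GW a b" for w0
  proof -
    have w00: "w0 + w0 \<in> GW a b" using w0 by simp
    have t0: "?phi w0 \<in> EW a b" "(w0 + w0) - ?phi w0 \<in> CW" using hE_prop[OF w00] by auto
    have eqv: "?phi w = ?phi w0 \<longleftrightarrow> (w - w0) + (w - w0) \<in> CW" if w: "w \<in> GW a b" for w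
    proof
      have ww: "w + w \<in> GW a b" using w by simp
      assume eq: "?phi w = ?phi w0"
      have "(w + w) - ?phi w \<in> CW" using hE_prop[OF ww] by auto
      then have h1: "(w + w) - ?phi w0 \<in> CW" using eq by simp
      have "((w + w) - ?phi w0) - ((w0 + w0) - ?phi w0) \<in> CW"
        using subgrp_diff[OF subgrp_CW h1 t0(2)] .
      moreover have eq2: "((w + w) - ?phi w0) - ((w0 + w0) - ?phi w0) = (w - w0) + (w - w0)"
        by (simp add: algebra_simps)
      ultimately show "(w - w0) + (w - w0) \<in> CW" by (simp only: eq2)
    next
      have ww: "w + w \<in> GW a b" using w by simp
      assume as: "(w - w0) + (w - w0) \<in> CW"
      have h2: "((w - w0) + (w - w0)) + ((w0 + w0) - ?phi w0) \<in> CW"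
        using subgrp_add[OF subgrp_CW as t0(2)] .
      have eq3: "((w - w0) + (w - w0)) + ((w0 + w0) - ?phi w0) = (w + w) - ?phi w0"
        by (simp add: algebra_simps)
      have "(w + w) - ?phi w0 \<in> CW" using h2 unfolding eq3 .
      then show "?phi w = ?phi w0" using hE_uniq[OF ww t0(1)] by simp
    qed
    have "{y \<in> GW a b. ?phi y = ?phi w0} = (\<lambda>y. w0 + y) ` K2"
    proof
      show "{y \<in> GW a b. ?phi y = ?phi w0} \<subseteq> (\<lambda>y. w0 + y) ` K2"
      proof
        fix w assume "w \<in> {y \<in> GW a b. ?phi y = ?phi w0}"
        then have w: "w \<in> GW a b" "?phi w = ?phi w0" by auto
        then have "w - w0 \<in> K2" using eqv[OF w(1)] w0 by (simp add: K2_def)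
        moreover have "w = w0 + (w - w0)" by simp
        ultimately show "w \<in> (\<lambda>y. w0 + y) ` K2" by blast
      qed
      show "(\<lambda>y. w0 + y) ` K2 \<subseteq> {y \<in> GW a b. ?phi y = ?phi w0}"
      proof
        fix w assume "w \<in> (\<lambda>y. w0 + y) ` K2"
        then obtain y where y: "y \<in> K2" "w = w0 + y" by blast
        then have yG: "y \<in> GW a b" "y + y \<in> CW" by (auto simp: K2_def)
        then have wG: "w \<in> GW a b" using y(2) w0 by simp
        have "w - w0 = y" using y(2) by simp
        then have "?phi w = ?phi w0" using eqv[OF wG] yG(2) by simp
        then show "w \<in> {y \<in> GW a b. ?phi y = ?phi w0}" using wG by simp
      qed
    qed
    moreover have "inj_on (\<lambda>y. w0 + y) K2" by (simp add: inj_on_def)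
    ultimately show ?thesis by (simp add: card_image)
  qed
  have "card (GW a b) = card (?phi ` GW a b) * card K2"
  proof (rule card_fibers_const)
    show "finite (GW a b)" by simp
    show "\<forall>x\<in>GW a b. card {y \<in> GW a b. ?phi y = ?phi x} = card K2" by (intro ballI fib)
  qed
  then have e1: "card CW * 4 ^ r = card (?phi ` GW a b) * (card CW * 2 ^ r)"
    by (simp only: card_tiling card_EW card_K2 card_E2)
  have "card CW \<noteq> 0" using finite_CW subgrp_zero[OF subgrp_CW] by auto
  then have e2: "4 ^ r = card (?phi ` GW a b) * 2 ^ r" using e1 by (simp add: mult.left_commute)
  have "(4::nat) ^ r = 2 ^ r * 2 ^ r" by (simp add: power_mult_distrib[symmetric])
  then have c: "card (?phi ` GW a b) = 2 ^ r" using e2 by simp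
  have sub: "?phi ` GW a b \<subseteq> E2" using P2 by blast
  have "finite E2" by (simp add: E2_def)
  then show ?thesis using card_subset_eq[OF _ sub] c card_E2 by simp
qed

lemma P1: "i < a \<Longrightarrow> \<exists>w\<in>GW a b. (w + w) - eX i \<in> CW"
proof -
  assume i: "i < a"
  have "eX i \<in> E2" using i by (simp add: E2_def)
  then have "eX i \<in> (\<lambda>w. hE (w + w)) ` GW a b" using phi_image by simp
  then obtain w where w: "w \<in> GW a b" "eX i = hE (w + w)" by blast
  have "w + w \<in> GW a b" using w(1) by simp
  then have "(w + w) - hE (w + w) \<in> CW" using hE_prop by blast
  then have "(w + w) - eX i \<in> CW" using w(2) by simp
  then show ?thesis using w(1) by blast
qed

end


lemma z2_add_self: "(v::2) + v = 0"
  using z2_cases[of v] by auto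

context P34
begin

lemma DW_mem: "d \<in> DW \<Longrightarrow> u \<in> CW \<Longrightarrow> ipW a b u d = 0" by (simp add: DW_def dualW_def)

lemma E2_ip: "e \<in> E2 \<Longrightarrow> fst d = 0 \<Longrightarrow> ipW a b e d = 0"
proof -
  assume e: "e \<in> E2" and f: "fst d = 0"
  from e consider "e = 0" | i where "i < a" "e = eX i" unfolding E2_def by blast
  then show ?thesis
  proof cases
    case 1 then show ?thesis by simp
  next
    case (2 i) then show ?thesis using ipW_eX[OF 2(1), of b d] f by simp
  qed
qed

lemma partC1: "d \<in> DW \<Longrightarrow> fst d = 0 \<Longrightarrow> d + d = 0"
proof -
  assume d: "d \<in> DW" and f: "fst d = 0"
  have dG: "d \<in> GW a b" using d DW_GW by blast
  have "snd d j + snd d j = 0" for j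
  proof (cases "j < b")
    case True
    define x where "x = fZ j"
    have xG: "x + x \<in> GW a b" using fZ_GW[OF True] by (simp add: x_def)
    have e: "hE (x + x) \<in> E2" using P2 fZ_GW[OF True] by (simp add: x_def)
    have "(x + x) - hE (x + x) \<in> CW" using hE_prop[OF xG] by simp
    then have "ipW a b ((x + x) - hE (x + x)) d = 0" using DW_mem d by blast
    then have "ipW a b (x + x) d = ipW a b (hE (x + x)) d" by (simp add: ipW_diff1)
    also have "\<dots> = 0" using E2_ip[OF e f] .
    finally have "ipW a b (x + x) d = 0" .
    moreover have "ipW a b (x + x) d = snd d j + snd d j" by (simp add: ipW_add1 ipW_fZ True x_def)
    ultimately show ?thesis by simp
  next
    case False then show ?thesis using dG by (simp add: GW_def)
  qed
  then show "d + d = 0" using f by (simp add: prod_eq_iff fun_eq_iff)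
qed

lemma partC2: "d \<in> DW \<Longrightarrow> d + d = 0 \<Longrightarrow> fst d = 0"
proof -
  assume d: "d \<in> DW" and dd: "d + d = 0"
  have dG: "d \<in> GW a b" using d DW_GW by blast
  have "fst d i = 0" for i
  proof (cases "i < a")
    case True
    obtain w where w: "w \<in> GW a b" "(w + w) - eX i \<in> CW" using P1[OF True] by blast
    have "ipW a b ((w + w) - eX i) d = 0" using DW_mem d w(2) by blast
    moreover have "ipW a b (w + w) d = 0"
    proof -
      have "ipW a b (w + w) d = ipW a b w (d + d)" by (simp add: ipW_add1 ipW_add2)
      then show ?thesis using dd by simp
    qed
    ultimately have "ipW a b (eX i) d = 0" by (simp add: ipW_diff1)
    then show ?thesis using ipW_eX[OF True] by simp
  next
    case False then show ?thesis using dG by (simp add: GW_def)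
  qed
  then show ?thesis by (simp add: fun_eq_iff)
qed

definition "VX = fst ` DW"

lemma card_VX: "card VX \<le> 2 ^ r"
proof -
  let ?K = "{d \<in> DW. fst d = 0}" and ?B = "{d \<in> DW. d + d = 0}"
  have K: "?K = ?B" using partC1 partC2 by blast
  have h1: "card DW = card VX * card ?K"
    unfolding VX_def by (rule card_hom[OF subgrp_DW finite_DW, where f=fst]) simp
  have dbl: "(x + y) + (x + y) = (x + x) + (y + y)" for x y :: w by (simp add: algebra_simps)
  have h2: "card DW = card ((\<lambda>d. d + d) ` DW) * card ?B"
    by (rule card_hom[OF subgrp_DW finite_DW, where f="\<lambda>d. d + d"]) (rule dbl)
  have sub: "(\<lambda>d. d + d) ` DW \<subseteq> ?B"
  proof
    fix y assume "y \<in> (\<lambda>d. d + d) ` DW"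
    then obtain d where d: "d \<in> DW" "y = d + d" by blast
    have "y \<in> DW" using subgrp_add[OF subgrp_DW d(1) d(1)] d(2) by simp
    moreover have "y + y = 0" using d(2) w_four[of d] by (simp add: add.assoc)
    ultimately show "y \<in> ?B" by simp
  qed
  have finB: "finite ?B" using finite_DW by simp
  have "card ((\<lambda>d. d + d) ` DW) \<le> card ?B" using card_mono[OF finB sub] .
  then have "card ((\<lambda>d. d + d) ` DW) * card ?B \<le> card ?B * card ?B" by (rule mult_le_mono1)
  then have le: "4 ^ r \<le> card ?B * card ?B" using h2 card_DW by simp
  have B: "2 ^ r \<le> card ?B"
  proof (rule ccontr)
    assume "\<not> 2 ^ r \<le> card ?B"
    then have "card ?B < 2 ^ r" by simp
    then have "card ?B * card ?B < 2 ^ r * 2 ^ r" by (simp add: mult_strict_mono)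
    also have "(2::nat) ^ r * 2 ^ r = 4 ^ r" by (simp add: power_mult_distrib[symmetric])
    finally show False using le by simp
  qed
  have "card VX * 2 ^ r \<le> card VX * card ?B" using B by simp
  also have "\<dots> = 4 ^ r" using h1 K card_DW by simp
  also have "(4::nat) ^ r = 2 ^ r * 2 ^ r" by (simp add: power_mult_distrib[symmetric])
  finally show ?thesis by simp
qed

lemma nonC_witness: "x \<in> GW a b \<Longrightarrow> x \<notin> CW \<Longrightarrow> \<exists>d\<in>DW. ipW a b x d \<noteq> 0"
proof -
  assume x: "x \<in> GW a b" "x \<notin> CW"
  then have "x \<notin> dualW a b DW" using dual_DW by simp
  then obtain d where "d \<in> DW" "ipW a b d x \<noteq> 0" using x(1) by (auto simp: dualW_def)
  then show ?thesis using ipW_sym by metis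
qed

lemma S1: "i < a \<Longrightarrow> \<exists>d\<in>DW. fst d i \<noteq> 0"
proof -
  assume i: "i < a"
  have xG: "eX i \<in> GW a b" using eX_GW[OF i] .
  have "eX i \<notin> CW"
  proof
    assume c: "eX i \<in> CW"
    have "eX i - 0 \<in> EW a b" using i by (simp add: EW_def)
    moreover have "eX i - eX i \<in> EW a b" by (simp add: EW_def)
    moreover have "0 \<in> CW" using subgrp_CW subgrp_zero by blast
    ultimately have "0 = eX i" using tiling[OF xG] c by (metis (no_types, lifting))
    then show False using eX_ne0 by metis
  qed
  then obtain d where d: "d \<in> DW" "ipW a b (eX i) d \<noteq> 0" using nonC_witness xG by blast
  then show ?thesis using ipW_eX[OF i] by auto
qed

lemma S2: "i < a \<Longrightarrow> j < a \<Longrightarrow> i \<noteq> j \<Longrightarrow> \<exists>d\<in>DW. fst d i \<noteq> fst d j"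
proof -
  assume i: "i < a" and j: "j < a" and ij: "i \<noteq> j"
  define x where "x = eX i + eX j"
  have xG: "x \<in> GW a b" using eX_GW[OF i] eX_GW[OF j] by (simp add: x_def)
  have yG: "eX i \<in> GW a b" using eX_GW[OF i] .
  have "x \<notin> CW"
  proof
    assume c: "x \<in> CW"
    have "eX i - 0 \<in> EW a b" using i by (simp add: EW_def)
    moreover have "eX i - x = eX j" by (simp add: x_def neg_eX)
    then have "eX i - x \<in> EW a b" using j by (simp add: EW_def)
    moreover have "0 \<in> CW" using subgrp_CW subgrp_zero by blast
    ultimately have "0 = x" using tiling[OF yG] c by (metis (no_types, lifting))
    then have "fst x i = 0" by simp
    then show False using ij by (simp add: x_def eX_def)
  qed
  then obtain d where d: "d \<in> DW" "ipW a b x d \<noteq> 0" using nonC_witness xG by blast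
  then have "tw (fst d i + fst d j) \<noteq> 0" using ipW_eX[OF i] ipW_eX[OF j] by (simp add: x_def ipW_add1 tw_add)
  then have "fst d i \<noteq> fst d j" using z2_add_self by auto
  then show ?thesis using d(1) by blast
qed

end


definition comb :: "nat \<Rightarrow> (nat \<Rightarrow> nat \<Rightarrow> 2) \<Rightarrow> (nat \<Rightarrow> nat) \<Rightarrow> (nat \<Rightarrow> 2)" where
  "comb m g c = (\<lambda>j. \<Sum>k<m. of_nat (c k) * g k j)"

definition lin2 :: "(nat \<Rightarrow> 2) set \<Rightarrow> bool" where
  "lin2 V \<longleftrightarrow> 0 \<in> V \<and> (\<forall>x\<in>V. \<forall>y\<in>V. x + y \<in> V)"

lemma fun2_self: "(x::nat \<Rightarrow> 2) + x = 0"
  by (simp add: fun_eq_iff z2_add_self)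

lemma comb_Suc: "comb (Suc m) g c = comb m g c + (\<lambda>j. of_nat (c m) * g m j)"
  by (simp add: comb_def fun_eq_iff)

lemma scal_in: "lin2 V \<Longrightarrow> v \<in> V \<Longrightarrow> (\<lambda>j. (of_nat n :: 2) * v j) \<in> V"
proof -
  assume V: "lin2 V" and v: "v \<in> V"
  show ?thesis
  proof (cases "(of_nat n :: 2) = 0")
    case True
    then have "(\<lambda>j. (of_nat n :: 2) * v j) = 0" by (simp add: fun_eq_iff)
    then show ?thesis using V by (simp add: lin2_def)
  next
    case False
    then have "(of_nat n :: 2) = 1" using z2_cases by blast
    then show ?thesis using v by simp
  qed
qed

lemma comb_in: "lin2 V \<Longrightarrow> (\<forall>k<m. g k \<in> V) \<Longrightarrow> comb m g c \<in> V"
proof (induction m)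
  case 0 then show ?case by (simp add: comb_def lin2_def zero_fun_def)
next
  case (Suc m)
  then have "comb m g c \<in> V" by simp
  moreover have "(\<lambda>j. of_nat (c m) * g m j) \<in> V" using scal_in Suc.prems by simp
  ultimately show ?case using Suc.prems(1) unfolding comb_Suc lin2_def by blast
qed

lemma comb_add: "comb m g c + comb m g c' = comb m g (\<lambda>k. (c k + c' k) mod 2)"
  by (simp add: comb_def fun_eq_iff of_nat_mod2 sum.distrib[symmetric] distrib_right)

lemma comb_cong: "(\<forall>k<m. c k = c' k) \<Longrightarrow> comb m g c = comb m g c'"
  by (simp add: comb_def)

lemma comb_upd: "comb m (g(m := v)) c = comb m g c"
  by (simp add: comb_def)

lemma binvecs_upd: "c \<in> binvecs (Suc m) \<Longrightarrow> c(m := 0) \<in> binvecs m"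
  by (auto simp: binvecs_def)

lemma comb_ext_inj:
  assumes inj: "inj_on (comb m g) (binvecs m)" and v: "v \<notin> comb m g ` binvecs m"
  shows "inj_on (comb (Suc m) (g(m := v))) (binvecs (Suc m))"
proof (rule inj_onI)
  fix c1 c2 assume c1: "c1 \<in> binvecs (Suc m)" and c2: "c2 \<in> binvecs (Suc m)"
    and eq: "comb (Suc m) (g(m := v)) c1 = comb (Suc m) (g(m := v)) c2"
  define A where "A = comb m g (c1(m := 0))"
  define B where "B = comb m g (c2(m := 0))"
  have cA: "comb m g c1 = A" unfolding A_def by (rule comb_cong) simp
  have cB: "comb m g c2 = B" unfolding B_def by (rule comb_cong) simp
  have e: "A + (\<lambda>j. of_nat (c1 m) * v j) = B + (\<lambda>j. of_nat (c2 m) * v j)"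
    using eq by (simp add: comb_Suc comb_upd cA cB)
  have lt: "c1 m < 2" "c2 m < 2" using c1 c2 by (auto simp: binvecs_def)
  show "c1 = c2"
  proof (cases "c1 m = c2 m")
    case True
    then have "A = B" using e by simp
    then have "c1(m := 0) = c2(m := 0)" using inj binvecs_upd[OF c1] binvecs_upd[OF c2]
      unfolding A_def B_def by (metis inj_onD)
    then show ?thesis using True by (metis fun_upd_triv fun_upd_upd)
  next
    case False
    have "v = A + B"
    proof (cases "c1 m = 0")
      case True
      then have "c2 m = 1" using False lt by simp
      then have h: "A = B + v" using e True by (simp add: fun_eq_iff)
      have "A + B = v + (B + B)" unfolding h by (simp only: ac_simps)
      then show ?thesis by (simp add: fun2_self)
    next
      case False
      then have "c1 m = 1" "c2 m = 0" using \<open>c1 m \<noteq> c2 m\<close> lt by simp_all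
      then have "A + v = B" using e by (simp add: fun_eq_iff)
      then have "A + B = (A + A) + v" by (simp only: ac_simps)
      then show ?thesis by (simp add: fun2_self)
    qed
    also have "A + B = comb m g (\<lambda>k. ((c1(m := 0)) k + (c2(m := 0)) k) mod 2)"
      unfolding A_def B_def by (rule comb_add)
    finally have "v \<in> comb m g ` binvecs m"
      using c1 c2 by (auto simp: binvecs_def)
    then show ?thesis using v by simp
  qed
qed

lemma binvecs_card: "finite (binvecs n) \<and> card (binvecs n) = 2 ^ n"
  using vecs_card[of 2 n] by (simp add: binvecs_vecs)

lemma basis_exists:
  assumes fin: "finite V" and V: "lin2 V"
  shows "\<exists>m g. (\<forall>k<m. g k \<in> V) \<and> inj_on (comb m g) (binvecs m) \<and> comb m g ` binvecs m = V"
proof -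
  define M where "M = {m. \<exists>g. (\<forall>k<m. g k \<in> V) \<and> inj_on (comb m g) (binvecs m)}"
  have bound: "m \<le> card V" if mM: "m \<in> M" for m
  proof -
    obtain g where g: "\<forall>k<m. g k \<in> V" "inj_on (comb m g) (binvecs m)" using mM unfolding M_def by blast
    have "comb m g ` binvecs m \<subseteq> V" using comb_in[OF V g(1)] by blast
    then have "card (comb m g ` binvecs m) \<le> card V" using fin by (simp add: card_mono)
    then have "2 ^ m \<le> card V" using g(2) binvecs_card[of m] by (simp add: card_image)
    moreover have "m < 2 ^ m" by (rule less_exp)
    ultimately show ?thesis by linarith
  qed
  have finM: "finite M" using bound by (meson finite_nat_set_iff_bounded_le)
  have "0 \<in> M"
  proof -
    have "binvecs 0 = {\<lambda>_. 0}" by (auto simp: binvecs_def)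
    then show ?thesis by (simp add: M_def)
  qed
  then have ne: "M \<noteq> {}" by blast
  define m where "m = Max M"
  have mM: "m \<in> M" using finM ne by (simp add: m_def)
  then obtain g where g: "\<forall>k<m. g k \<in> V" "inj_on (comb m g) (binvecs m)" using M_def by blast
  have sub: "comb m g ` binvecs m \<subseteq> V" using comb_in[OF V g(1)] by blast
  have "comb m g ` binvecs m = V"
  proof (rule ccontr)
    assume "comb m g ` binvecs m \<noteq> V"
    then obtain v where v: "v \<in> V" "v \<notin> comb m g ` binvecs m" using sub by blast
    have "\<forall>k<Suc m. (g(m := v)) k \<in> V" using g(1) v(1) by (simp add: less_Suc_eq)
    moreover have "inj_on (comb (Suc m) (g(m := v))) (binvecs (Suc m))" by (rule comb_ext_inj[OF g(2) v(2)])
    ultimately have "Suc m \<in> M" unfolding M_def by blast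
    then have "Suc m \<le> m" using finM by (simp add: m_def)
    then show False by simp
  qed
  then show ?thesis using g by blast
qed


lemma Z24_add: "x \<in> Z24 a b \<Longrightarrow> y \<in> Z24 a b \<Longrightarrow> z24_add x y \<in> Z24 a b"
  by (auto simp: Z24_def binvecs_def quatvecs_def z24_add_def)
lemma Z24_zero: "z24_zero \<in> Z24 a b"
  by (auto simp: Z24_def binvecs_def quatvecs_def z24_zero_def)

context P34
begin

lemma D_Z24: "z24_dual a b C \<subseteq> Z24 a b" by (auto simp: z24_dual_def)

lemma emb_D: "emb ` z24_dual a b C = DW"
proof
  show "emb ` z24_dual a b C \<subseteq> DW"
  proof
    fix w assume "w \<in> emb ` z24_dual a b C"
    then obtain z where z: "z \<in> z24_dual a b C" "w = emb z" by blast
    have "z \<in> Z24 a b" "\<forall>u\<in>C. z24_inner a b u z = 0" using z(1) by (auto simp: z24_dual_def)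
    then have "emb z \<in> GW a b" "\<forall>u\<in>C. ipW a b (emb u) (emb z) = 0" using emb_in inner_zero_iff by auto
    then show "w \<in> DW" using z(2) by (auto simp: DW_def dualW_def CW_def)
  qed
  show "DW \<subseteq> emb ` z24_dual a b C"
  proof
    fix w assume w: "w \<in> DW"
    define z where "z = unemb w"
    have wG: "w \<in> GW a b" using w DW_GW by blast
    have z: "z \<in> Z24 a b" "emb z = w" using unemb_in[OF wG] by (auto simp: z_def)
    have "\<forall>u\<in>C. ipW a b (emb u) (emb z) = 0" using w z(2) by (auto simp: DW_def dualW_def CW_def)
    then have "\<forall>u\<in>C. z24_inner a b u z = 0" using inner_zero_iff by auto
    then have "z \<in> z24_dual a b C" using z(1) by (simp add: z24_dual_def)
    then show "w \<in> emb ` z24_dual a b C" using z(2) by blast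
  qed
qed

lemma lin2_VX: "lin2 VX"
proof -
  have "0 \<in> DW" using subgrp_DW subgrp_zero by blast
  then have "fst (0::w) \<in> VX" unfolding VX_def by (rule imageI)
  then have "0 \<in> VX" by simp
  moreover have "x + y \<in> VX" if xy: "x \<in> VX" "y \<in> VX" for x y
  proof -
    obtain dx where dx: "dx \<in> DW" "x = fst dx" using xy(1) unfolding VX_def by blast
    obtain dy where dy: "dy \<in> DW" "y = fst dy" using xy(2) unfolding VX_def by blast
    have "dx + dy \<in> DW" using subgrp_add[OF subgrp_DW dx(1) dy(1)] .
    then have "fst (dx + dy) \<in> VX" unfolding VX_def by (rule imageI)
    then show ?thesis using dx dy by simp
  qed
  ultimately show ?thesis by (simp add: lin2_def)
qed

lemma finite_VX: "finite VX" unfolding VX_def using finite_DW by simp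

lemma VX_out: "v \<in> VX \<Longrightarrow> a \<le> j \<Longrightarrow> v j = 0"
  unfolding VX_def using DW_GW by (auto simp: GW_def)

lemma comb_at: "comb m g c j = 0" if "\<forall>k<m. g k j = 0"
  using that by (simp add: comb_def)

theorem simplex_part: "simplex_code r a (proj_X (z24_dual a b C))"
proof -
  obtain m g where g: "\<forall>k<m. g k \<in> VX" "inj_on (comb m g) (binvecs m)" "comb m g ` binvecs m = VX"
    using basis_exists[OF finite_VX lin2_VX] by blast
  have "card (comb m g ` binvecs m) = card (binvecs m)" using g(2) by (rule card_image)
  then have cardVX: "card VX = 2 ^ m" using g(3) binvecs_card[of m] by simp
  define col where "col = (\<lambda>j. \<lambda>k. if k < m then conv2 (g k j) else 0)"
  have allV: "\<exists>c. v = comb m g c" if vV: "v \<in> VX" for v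
  proof -
    have "v \<in> comb m g ` binvecs m" using vV g(3) by simp
    then show ?thesis by blast
  qed
  have colz: "col j \<noteq> (\<lambda>_. 0)" if j: "j < a" for j
  proof
    assume z: "col j = (\<lambda>_. 0)"
    have gz: "\<forall>k<m. g k j = 0"
    proof (intro allI impI)
      fix k assume "k < m"
      then have "conv2 (g k j) = 0" using fun_cong[OF z, of k] by (simp add: col_def)
      then show "g k j = 0" using conv2_inj[of "g k j" 0] by simp
    qed
    obtain d where d: "d \<in> DW" "fst d j \<noteq> 0" using S1[OF j] by blast
    have "fst d \<in> VX" unfolding VX_def using d(1) by (rule imageI)
    then obtain c where "fst d = comb m g c" using allV by blast
    then have "fst d j = 0" using comb_at[where m=m and g=g and j=j and c=c, OF gz] by simp
    then show False using d(2) by simp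
  qed
  have col_in: "col j \<in> binvecs m - {\<lambda>_. 0}" if ja: "j < a" for j
  proof -
    have "col j \<in> binvecs m" unfolding binvecs_def col_def by (simp add: conv2_lt)
    then show ?thesis using colz[OF ja] by simp
  qed
  have col_inj: "inj_on col {..<a}"
  proof (rule inj_onI)
    fix i j assume i: "i \<in> {..<a}" and j: "j \<in> {..<a}" and e: "col i = col j"
    have gij: "\<forall>k<m. g k i = g k j"
    proof (intro allI impI)
      fix k assume "k < m"
      then have "conv2 (g k i) = conv2 (g k j)" using fun_cong[OF e, of k] by (simp add: col_def)
      then show "g k i = g k j" using conv2_inj by blast
    qed
    show "i = j"
    proof (rule ccontr)
      assume "i \<noteq> j"
      moreover have "i < a" "j < a" using i j by auto
      ultimately obtain d where d: "d \<in> DW" "fst d i \<noteq> fst d j" using S2 by blast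
      have "fst d \<in> VX" unfolding VX_def using d(1) by (rule imageI)
      then obtain c where "fst d = comb m g c" using allV by blast
      moreover have "comb m g c i = comb m g c j" using gij by (simp add: comb_def)
      ultimately show False using d(2) by simp
    qed
  qed
  have finB: "finite (binvecs m - {\<lambda>_. 0})" using binvecs_card by simp
  have z0: "(\<lambda>_. 0) \<in> binvecs m" by (simp add: binvecs_def)
  have cB: "card (binvecs m - {\<lambda>_. 0}) = 2 ^ m - 1" using binvecs_card[of m] z0 by simp
  have "col ` {..<a} \<subseteq> binvecs m - {\<lambda>_. 0}" using col_in by (simp add: image_subset_iff)
  then have "card {..<a} \<le> card (binvecs m - {\<lambda>_. 0})" using card_inj_on_le[OF col_inj _ finB] by blast
  then have am: "a \<le> 2 ^ m - 1" using cB by simp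
  have p1: "(1::nat) \<le> 2 ^ m" by simp
  have "2 ^ r \<le> (2::nat) ^ m" using am arith(2) p1 by linarith
  then have rm: "r \<le> m" by simp
  have "2 ^ m \<le> (2::nat) ^ r" using card_VX cardVX by simp
  then have "m \<le> r" by simp
  with rm have mr: "m = r" by simp
  have bij: "bij_betw col {..<a} (binvecs m - {\<lambda>_. 0})"
  proof -
    have sub: "col ` {..<a} \<subseteq> binvecs m - {\<lambda>_. 0}" using col_in by (simp add: image_subset_iff)
    have "card (col ` {..<a}) = a" using col_inj by (simp add: card_image)
    also have "a = 2 ^ m - 1" using arith(2) mr by simp
    finally have "card (col ` {..<a}) = card (binvecs m - {\<lambda>_. 0})" using cB by simp
    then have "col ` {..<a} = binvecs m - {\<lambda>_. 0}" using card_subset_eq[OF finB sub] by simp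
    then show ?thesis using col_inj by (simp add: bij_betw_def)
  qed
  define gN where "gN = (\<lambda>k j. if k < r then conv2 (g k j) else 0)"
  have gN_bin: "\<forall>k<r. gN k \<in> binvecs a"
  proof (intro allI impI)
    fix k assume k: "k < r"
    have gk: "g k \<in> VX" using g(1) k mr by simp
    have "gN k j = 0" if "a \<le> j" for j using VX_out[OF gk that] k by (simp add: gN_def)
    then show "gN k \<in> binvecs a" using k by (auto simp: gN_def binvecs_def conv2_lt)
  qed
  have col_eq: "(\<lambda>j. \<lambda>k. if k < r then gN k j else 0) = col"
    by (simp add: col_def gN_def mr fun_eq_iff)
  have fstD: "fst ` z24_dual a b C = (\<lambda>v j. conv2 (v j)) ` VX"
  proof -
    have "fst z = (\<lambda>j. conv2 (fst (emb z) j))" if "z \<in> z24_dual a b C" for z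
    proof -
      have "z \<in> Z24 a b" using that D_Z24 by blast
      then show ?thesis by (simp add: emb_def fun_eq_iff conv2_of_nat Z24_lt2)
    qed
    then have "fst ` z24_dual a b C = (\<lambda>z. (\<lambda>j. conv2 (fst (emb z) j))) ` z24_dual a b C"
      by (rule image_cong[OF refl])
    also have "\<dots> = (\<lambda>v j. conv2 (v j)) ` (fst ` (emb ` z24_dual a b C))" by (simp add: image_image)
    also have "\<dots> = (\<lambda>v j. conv2 (v j)) ` VX" by (simp add: emb_D VX_def)
    finally show ?thesis .
  qed
  have combeq: "(\<lambda>j. conv2 (comb r g c j)) = (\<lambda>j. if j < a then (\<Sum>k<r. c k * gN k j) mod 2 else 0)" for c
  proof
    fix j show "conv2 (comb r g c j) = (if j < a then (\<Sum>k<r. c k * gN k j) mod 2 else 0)"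
    proof (cases "j < a")
      case True
      have "(of_nat (\<Sum>k<r. c k * gN k j) :: 2) = comb r g c j"
        by (simp add: comb_def gN_def)
      then have "conv2 (comb r g c j) = conv2 (of_nat (\<Sum>k<r. c k * gN k j))" by simp
      then show ?thesis using True by (simp only: conv2_of_nat_mod) simp
    next
      case False
      have "\<forall>k<r. g k j = 0" using g(1) mr VX_out False by simp
      then show ?thesis using False comb_at[of r g j c] by simp
    qed
  qed
  have "proj_X (z24_dual a b C) = (\<lambda>v j. conv2 (v j)) ` (comb r g ` binvecs r)"
    unfolding proj_X_def fstD using g(3) mr by simp
  also have "\<dots> = (\<lambda>c. (\<lambda>j. if j < a then (\<Sum>k<r. c k * gN k j) mod 2 else 0)) ` binvecs r"
    by (simp add: image_image combeq)
  also have "\<dots> = {(\<lambda>j. if j < a then (\<Sum>k<r. c k * gN k j) mod 2 else 0) | c. c \<in> binvecs r}"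
    by blast
  finally have B: "proj_X (z24_dual a b C) = {(\<lambda>j. if j < a then (\<Sum>k<r. c k * gN k j) mod 2 else 0) | c. c \<in> binvecs r}" .
  have bij': "bij_betw (\<lambda>j. \<lambda>k. if k < r then gN k j else 0) {..<a} (binvecs r - {\<lambda>_. 0})"
    using bij unfolding col_eq mr .
  show ?thesis unfolding simplex_code_def
    by (intro conjI exI[of _ gN]) (rule a_eq | rule gN_bin | rule bij' | rule B)+
qed

theorem partC_nat:
  assumes z: "z \<in> z24_dual a b C"
  shows "(\<forall>i<a. fst z i = 0) \<longleftrightarrow> z \<in> order2_part (z24_dual a b C)"
proof -
  have zZ: "z \<in> Z24 a b" using z D_Z24 by blast
  have zD: "emb z \<in> DW" using z emb_D by blast
  have f: "(\<forall>i<a. fst z i = 0) \<longleftrightarrow> fst (emb z) = 0"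
  proof
    assume h: "\<forall>i<a. fst z i = 0"
    have "fst z i = 0" for i using h Z24_X0[OF zZ, of i] by (cases "i < a") auto
    then show "fst (emb z) = 0" by (simp add: emb_def fun_eq_iff)
  next
    assume h: "fst (emb z) = 0"
    show "\<forall>i<a. fst z i = 0"
    proof (intro allI impI)
      fix i assume "i < a"
      have "(of_nat (fst z i) :: 2) = of_nat 0" using fun_cong[OF h, of i] by (simp add: emb_def)
      then show "fst z i = 0" using of_nat_inj2[OF Z24_lt2[OF zZ, of i], of 0] by simp
    qed
  qed
  have o: "z \<in> order2_part (z24_dual a b C) \<longleftrightarrow> emb z + emb z = 0"
  proof
    assume "z \<in> order2_part (z24_dual a b C)"
    then have "z24_add z z = z24_zero" by (simp add: order2_part_def)
    then have "emb (z24_add z z) = emb z24_zero" by simp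
    then show "emb z + emb z = 0" by (simp only: emb_add emb_zero)
  next
    assume h: "emb z + emb z = 0"
    then have "emb (z24_add z z) = emb z24_zero" by (simp add: emb_add emb_zero)
    then have "z24_add z z = z24_zero" using inj_onD[OF emb_inj _ Z24_add[OF zZ zZ] Z24_zero] by blast
    then show "z \<in> order2_part (z24_dual a b C)" using z by (simp add: order2_part_def)
  qed
  show ?thesis unfolding f o using partC1[OF zD] partC2[OF zD] by blast
qed

end

theorem proposition3p4:
  fixes r \<alpha> \<beta> :: nat and C :: "z24vec set"
  assumes "r \<ge> 2"
    and "\<alpha> = 2 ^ r - 1"
    and "\<beta> = 2 ^ (r - 1) * (2 ^ r - 1)"
    and "z24_additive \<alpha> \<beta> C"
    and "z24_perfect1 \<alpha> \<beta> C"
    and "z24_cyclic \<alpha> \<beta> (z24_dual \<alpha> \<beta> C)"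
  shows "simplex_code r \<alpha> (proj_X (z24_dual \<alpha> \<beta> C))
       \<and> bin_cyclic \<alpha> (proj_X (z24_dual \<alpha> \<beta> C))
       \<and> (\<forall>z\<in>z24_dual \<alpha> \<beta> C.
             (\<forall>i<\<alpha>. fst z i = 0) \<longleftrightarrow> z \<in> order2_part (z24_dual \<alpha> \<beta> C))"
proof -
  interpret P34 r \<alpha> \<beta> C using assms(1-5) by unfold_locales
  have cyc: "bin_cyclic \<alpha> (proj_X (z24_dual \<alpha> \<beta> C))"
    unfolding bin_cyclic_def proj_X_def
  proof
    fix x assume "x \<in> fst ` z24_dual \<alpha> \<beta> C"
    then obtain z where z: "z \<in> z24_dual \<alpha> \<beta> C" "x = fst z" by blast
    then have "(rot \<alpha> (fst z), rot \<beta> (snd z)) \<in> z24_dual \<alpha> \<beta> C"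
      using assms(6) by (simp add: z24_cyclic_def)
    then have "fst (rot \<alpha> (fst z), rot \<beta> (snd z)) \<in> fst ` z24_dual \<alpha> \<beta> C" by (rule imageI)
    then show "rot \<alpha> x \<in> fst ` z24_dual \<alpha> \<beta> C" using z(2) by simp
  qed
  show ?thesis using simplex_part cyc partC_nat by blast
qed

end
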